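(* For each $N\ge1$ let $\eta^N(t)$ be an irreducible continuous-time Markov chain on a finite set $\Omega_N$ with jump rates $R_N(\eta,\xi)$, generator $L_N$ and unique stationary distribution $\nu_N$; let $A_N\subset\Omega_N$ with $\lim_N\nu_N(A_N)=0$ and $H_N=\inf\{t>0:\eta^N(t)\in A_N\}$. Let $S_N$ be an increasing sequence and $\mu_N$ probability measures on $\Omega_N$. Assume $$\lim_{N\to\infty}\Big\{\mu_N(A_N)+S_N\,\nu_N(A_N^c)\,r_N(A_N^c,A_N)\Big\}=0,\qquad \lim_{N\to\infty}\|R'_N(\cdot,A_N)\|_2\,\Big\|\frac{d\mu_N}{d\nu_N}\Big\|_2\,T^{\rm rel}_N\big(1-e^{-S_N/T^{\rm rel}_N}\big)=0,$$ where $R'_N(\eta,A_N)=\mathbf 1\{\eta\notin A_N\}R_N(\eta,A_N)$. Then $\lim_{N\to\infty}\mathbb P_{\mu_N}[H_N<S_N]=0$.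
   Context: $R_N(\eta,A_N)=\sum_{\zeta\in A_N}R_N(\eta,\zeta)$, $r_N(A_N^c,A_N)=\frac1{\nu_N(A_N^c)}\sum_{\xi\in A_N^c}\nu_N(\xi)R_N(\xi,A_N)$. $\|\cdot\|_2$ is the norm of $L^2(\nu_N)$. $T^{\rm rel}_N$ is the relaxation time, the inverse of the spectral gap of the symmetric part $(L_N+L_N^* )/2$ of the generator in $L^2(\nu_N)$, $L_N^*$ being the adjoint of $L_N$ in $L^2(\nu_N)$. $\mathbb P_{\mu_N}$ is the law of the chain started from $\mu_N$. *)

theory Defs
  imports Complex_Main
begin

definition irreducible :: "'a set \<Rightarrow> ('a \<Rightarrow> 'a \<Rightarrow> real) \<Rightarrow> bool" where
  "irreducible \<Omega> R \<longleftrightarrow>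
     (\<forall>x\<in>\<Omega>. \<forall>y\<in>\<Omega>. (x, y) \<in> {(u, v). u \<in> \<Omega> \<and> v \<in> \<Omega> \<and> u \<noteq> v \<and> R u v > 0}\<^sup>*)"

definition gen :: "'a set \<Rightarrow> ('a \<Rightarrow> 'a \<Rightarrow> real) \<Rightarrow> 'a \<Rightarrow> 'a \<Rightarrow> real" where
  "gen \<Omega> R x y = (if x = y then - (\<Sum>z\<in>\<Omega> - {x}. R x z) else R x y)"

definition is_prob :: "'a set \<Rightarrow> ('a \<Rightarrow> real) \<Rightarrow> bool" where
  "is_prob \<Omega> p \<longleftrightarrow> (\<forall>x\<in>\<Omega>. p x \<ge> 0) \<and> (\<Sum>x\<in>\<Omega>. p x) = 1"

definition stationary :: "'a set \<Rightarrow> ('a \<Rightarrow> 'a \<Rightarrow> real) \<Rightarrow> ('a \<Rightarrow> real) \<Rightarrow> bool" where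
  "stationary \<Omega> R \<nu> \<longleftrightarrow> is_prob \<Omega> \<nu> \<and> (\<forall>y\<in>\<Omega>. (\<Sum>x\<in>\<Omega>. \<nu> x * gen \<Omega> R x y) = 0)"

definition adj_gen :: "'a set \<Rightarrow> ('a \<Rightarrow> 'a \<Rightarrow> real) \<Rightarrow> ('a \<Rightarrow> real) \<Rightarrow> 'a \<Rightarrow> 'a \<Rightarrow> real" where
  "adj_gen \<Omega> R \<nu> x y = \<nu> y * gen \<Omega> R y x / \<nu> x"

definition sym_gen :: "'a set \<Rightarrow> ('a \<Rightarrow> 'a \<Rightarrow> real) \<Rightarrow> ('a \<Rightarrow> real) \<Rightarrow> 'a \<Rightarrow> 'a \<Rightarrow> real" where
  "sym_gen \<Omega> R \<nu> x y = (gen \<Omega> R x y + adj_gen \<Omega> R \<nu> x y) / 2"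

definition spectral_gap :: "'a set \<Rightarrow> ('a \<Rightarrow> 'a \<Rightarrow> real) \<Rightarrow> ('a \<Rightarrow> real) \<Rightarrow> real" where
  "spectral_gap \<Omega> R \<nu> = Inf {l. l > 0 \<and> (\<exists>f. (\<exists>x\<in>\<Omega>. f x \<noteq> 0) \<and>
        (\<forall>x\<in>\<Omega>. - (\<Sum>y\<in>\<Omega>. sym_gen \<Omega> R \<nu> x y * f y) = l * f x))}"

definition T_rel :: "'a set \<Rightarrow> ('a \<Rightarrow> 'a \<Rightarrow> real) \<Rightarrow> ('a \<Rightarrow> real) \<Rightarrow> real" where
  "T_rel \<Omega> R \<nu> = 1 / spectral_gap \<Omega> R \<nu>"

definition L2norm :: "'a set \<Rightarrow> ('a \<Rightarrow> real) \<Rightarrow> ('a \<Rightarrow> real) \<Rightarrow> real" where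
  "L2norm \<Omega> \<nu> f = sqrt (\<Sum>x\<in>\<Omega>. \<nu> x * (f x)\<^sup>2)"

definition rate_to :: "('a \<Rightarrow> 'a \<Rightarrow> real) \<Rightarrow> 'a \<Rightarrow> 'a set \<Rightarrow> real" where
  "rate_to R x A = (\<Sum>z\<in>A. R x z)"

definition meas :: "('a \<Rightarrow> real) \<Rightarrow> 'a set \<Rightarrow> real" where
  "meas p A = (\<Sum>x\<in>A. p x)"

definition cap_rate :: "'a set \<Rightarrow> ('a \<Rightarrow> 'a \<Rightarrow> real) \<Rightarrow> ('a \<Rightarrow> real) \<Rightarrow> 'a set \<Rightarrow> real" where
  "cap_rate \<Omega> R \<nu> A = (\<Sum>x\<in>\<Omega> - A. \<nu> x * rate_to R x A) / meas \<nu> (\<Omega> - A)"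

fun mpow :: "'a set \<Rightarrow> ('a \<Rightarrow> 'a \<Rightarrow> real) \<Rightarrow> nat \<Rightarrow> 'a \<Rightarrow> 'a \<Rightarrow> real" where
  "mpow B M 0 x y = (if x = y then 1 else 0)"
| "mpow B M (Suc k) x y = (\<Sum>z\<in>B. M x z * mpow B M k z y)"

definition mexp :: "'a set \<Rightarrow> real \<Rightarrow> ('a \<Rightarrow> 'a \<Rightarrow> real) \<Rightarrow> 'a \<Rightarrow> 'a \<Rightarrow> real" where
  "mexp B t M x y = (\<Sum>k. t ^ k / fact k * mpow B M k x y)"

text \<open>Law of the hitting time H = inf{t > 0 : eta(t) \<in> A} for the chain started
  from mu: for t > 0, P_mu[H \<ge> t] = sum over x in B = Omega - A of
  mu(x) (exp(t L_B) 1)(x), L_B the generator killed upon entering A.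
  hit_before \<Omega> R \<mu> A t = P_mu[H < t].\<close>
definition hit_before :: "'a set \<Rightarrow> ('a \<Rightarrow> 'a \<Rightarrow> real) \<Rightarrow> ('a \<Rightarrow> real) \<Rightarrow> 'a set \<Rightarrow> real \<Rightarrow> real" where
  "hit_before \<Omega> R \<mu> A t =
     (if t \<le> 0 then 0
      else 1 - (\<Sum>x\<in>\<Omega> - A. \<mu> x * (\<Sum>y\<in>\<Omega> - A. mexp (\<Omega> - A) t (gen \<Omega> R) x y)))"

end

theory Submission imports Defs "HOL-Analysis.Function_Topology" "HOL-Analysis.L2_Norm" begin


definition mC :: "'a set \<Rightarrow> ('a \<Rightarrow> 'a \<Rightarrow> real) \<Rightarrow> real" where
  "mC B M = (\<Sum>u\<in>B. \<Sum>v\<in>B. \<bar>M u v\<bar>)"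

lemma mC_nonneg: "mC B M \<ge> 0"
  unfolding mC_def by (intro sum_nonneg) auto

lemma mpow_bound:
  assumes "finite B" "x \<in> B"
  shows "\<bar>mpow B M k x y\<bar> \<le> mC B M ^ k"
  using assms(2)
proof (induction k arbitrary: x)
  case 0 then show ?case by simp
next
  case (Suc k)
  have "\<bar>mpow B M (Suc k) x y\<bar> \<le> (\<Sum>z\<in>B. \<bar>M x z * mpow B M k z y\<bar>)"
    by (simp add: sum_abs)
  also have "\<dots> \<le> (\<Sum>z\<in>B. \<bar>M x z\<bar> * mC B M ^ k)"
    by (intro sum_mono) (use Suc in \<open>auto simp: abs_mult intro: mult_left_mono\<close>)
  also have "\<dots> = (\<Sum>z\<in>B. \<bar>M x z\<bar>) * mC B M ^ k" by (simp add: sum_distrib_right)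
  also have "\<dots> \<le> mC B M * mC B M ^ k"
  proof (rule mult_right_mono)
    show "(\<Sum>z\<in>B. \<bar>M x z\<bar>) \<le> mC B M" unfolding mC_def
      using member_le_sum[of x B "\<lambda>u. \<Sum>v\<in>B. \<bar>M u v\<bar>"] assms Suc.prems
      by (auto intro: sum_nonneg)
  qed (simp add: mC_nonneg)
  finally show ?case by simp
qed

lemma mexp_term_bound:
  assumes "finite B" "x \<in> B"
  shows "norm (t ^ k / fact k * mpow B M k x y) \<le> inverse (fact k) * (\<bar>t\<bar> * mC B M) ^ k"
proof -
  have "norm (t ^ k / fact k * mpow B M k x y) = \<bar>t\<bar>^k / fact k * \<bar>mpow B M k x y\<bar>"
    by (simp add: abs_mult power_abs)
  also have "\<dots> \<le> \<bar>t\<bar>^k / fact k * mC B M ^ k"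
    by (intro mult_left_mono mpow_bound assms) auto
  finally show ?thesis by (simp add: power_mult_distrib divide_inverse mult_ac)
qed

lemma mexp_summable:
  assumes "finite B" "x \<in> B"
  shows "summable (\<lambda>k. t ^ k / fact k * mpow B M k x y)"
    and "summable (\<lambda>k. norm (t ^ k / fact k * mpow B M k x y))"
proof -
  show "summable (\<lambda>k. t ^ k / fact k * mpow B M k x y)"
    by (rule summable_comparison_test[OF _ summable_exp[of "\<bar>t\<bar> * mC B M"]])
       (use mexp_term_bound[OF assms] in blast)
  show "summable (\<lambda>k. norm (t ^ k / fact k * mpow B M k x y))"
    by (rule summable_comparison_test[OF _ summable_exp[of "\<bar>t\<bar> * mC B M"]])
       (use mexp_term_bound[OF assms] in auto)
qed

lemma mexp_cmult:
  assumes "finite B" "x \<in> B"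
  shows "(\<Sum>n. c * (t^n/fact n * mpow B M n x y)) = c * mexp B t M x y"
    and "(\<Sum>n. (t^n/fact n * mpow B M n x y) * c) = mexp B t M x y * c"
  unfolding mexp_def
  by (rule suminf_mult[OF mexp_summable(1)[OF assms]], rule suminf_mult2[symmetric, OF mexp_summable(1)[OF assms]])

lemma mexp_zero:
  "mexp B 0 M x y = (if x = y then 1 else 0)"
proof -
  have "mexp B 0 M x y = (\<Sum>k\<in>{0}. (0::real) ^ k / fact k * mpow B M k x y)"
    unfolding mexp_def by (rule suminf_finite) auto
  then show ?thesis by simp
qed

lemma mexp_Suc_left:
  assumes "finite B" "x \<in> B"
  shows "(\<Sum>n. t^n/fact n * mpow B M (Suc n) x y) = (\<Sum>z\<in>B. M x z * mexp B t M z y)"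
    and "summable (\<lambda>n. t^n/fact n * mpow B M (Suc n) x y)"
proof -
  have eq: "(\<lambda>n. t^n/fact n * mpow B M (Suc n) x y) = (\<lambda>n. \<Sum>z\<in>B. M x z * (t^n/fact n * mpow B M n z y))"
    by (auto simp: sum_distrib_left mult_ac)
  have s: "\<And>z. z \<in> B \<Longrightarrow> summable (\<lambda>n. M x z * (t^n/fact n * mpow B M n z y))"
    by (intro summable_mult mexp_summable assms)
  show "summable (\<lambda>n. t^n/fact n * mpow B M (Suc n) x y)"
    unfolding eq by (intro summable_sum s)
  have "(\<Sum>n. \<Sum>z\<in>B. M x z * (t^n/fact n * mpow B M n z y)) = (\<Sum>z\<in>B. \<Sum>n. M x z * (t^n/fact n * mpow B M n z y))"
    by (rule suminf_sum) (rule s)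
  also have "\<dots> = (\<Sum>z\<in>B. M x z * mexp B t M z y)"
    by (rule sum.cong[OF refl], rule mexp_cmult(1)[OF assms(1)])
  finally show "(\<Sum>n. t^n/fact n * mpow B M (Suc n) x y) = (\<Sum>z\<in>B. M x z * mexp B t M z y)"
    unfolding eq .
qed

lemma mexp_deriv_raw:
  assumes "finite B" "x \<in> B"
  shows "((\<lambda>t. mexp B t M x y) has_real_derivative (\<Sum>n. t^n/fact n * mpow B M (Suc n) x y)) (at t)"
proof -
  define c where "c n = mpow B M n x y / fact n" for n
  have m: "mexp B s M x y = (\<Sum>n. c n * s^n)" for s
    unfolding mexp_def c_def by (simp add: field_simps)
  have "((\<lambda>s. \<Sum>n. c n * s^n) has_field_derivative (\<Sum>n. diffs c n * t^n)) (at t)"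
  proof (rule termdiffs_strong_converges_everywhere)
    fix s :: real
    show "summable (\<lambda>n. c n * s ^ n)"
      using mexp_summable(1)[OF assms, of s M y] unfolding c_def by (simp add: field_simps)
  qed
  moreover have "diffs c n * t^n = t^n/fact n * mpow B M (Suc n) x y" for n
  proof -
    have "diffs c n = mpow B M (Suc n) x y / fact n"
      unfolding diffs_def c_def by (simp del: mpow.simps of_nat_Suc add: fact_Suc)
    then show ?thesis by simp
  qed
  ultimately show ?thesis unfolding m by simp
qed

lemma mpow_Suc_right:
  assumes "finite B" "x \<in> B" "y \<in> B"
  shows "mpow B M (Suc k) x y = (\<Sum>z\<in>B. mpow B M k x z * M z y)"
  using assms(2)
proof (induction k arbitrary: x)
  case 0
  have "(\<Sum>z\<in>B. (if x = z then 1 else 0) * M z y) = (\<Sum>z\<in>B. if x = z then M z y else 0)"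
    by (rule sum.cong) auto
  also have "\<dots> = M x y" using 0 assms by simp
  finally have a: "(\<Sum>z\<in>B. (if x = z then 1 else 0) * M z y) = M x y" .
  have "(\<Sum>z\<in>B. M x z * (if z = y then 1 else 0)) = (\<Sum>z\<in>B. if y = z then M x z else 0)"
    by (rule sum.cong) auto
  also have "\<dots> = M x y" using assms by simp
  finally have b: "(\<Sum>z\<in>B. M x z * (if z = y then 1 else 0)) = M x y" .
  show ?case using a b by simp
next
  case (Suc k)
  have "mpow B M (Suc (Suc k)) x y = (\<Sum>z\<in>B. M x z * (\<Sum>w\<in>B. mpow B M k z w * M w y))"
    by (subst mpow.simps(2), rule sum.cong[OF refl], subst Suc.IH, auto)
  also have "\<dots> = (\<Sum>z\<in>B. \<Sum>w\<in>B. M x z * mpow B M k z w * M w y)"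
    by (simp add: sum_distrib_left mult_ac)
  also have "\<dots> = (\<Sum>w\<in>B. \<Sum>z\<in>B. M x z * mpow B M k z w * M w y)"
    by (rule sum.swap)
  also have "\<dots> = (\<Sum>w\<in>B. (\<Sum>z\<in>B. M x z * mpow B M k z w) * M w y)"
    by (simp add: sum_distrib_right)
  finally show ?case by simp
qed

lemma mexp_Suc_right:
  assumes "finite B" "x \<in> B" "y \<in> B"
  shows "(\<Sum>n. t^n/fact n * mpow B M (Suc n) x y) = (\<Sum>z\<in>B. mexp B t M x z * M z y)"
proof -
  have eq: "(\<lambda>n. t^n/fact n * mpow B M (Suc n) x y) = (\<lambda>n. \<Sum>z\<in>B. (t^n/fact n * mpow B M n x z) * M z y)"
    using mpow_Suc_right[OF assms] by (auto simp: sum_distrib_left mult_ac)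
  have "(\<Sum>n. \<Sum>z\<in>B. (t^n/fact n * mpow B M n x z) * M z y) = (\<Sum>z\<in>B. \<Sum>n. (t^n/fact n * mpow B M n x z) * M z y)"
    by (rule suminf_sum, rule summable_mult2, rule mexp_summable(1)[OF assms(1,2)])
  also have "\<dots> = (\<Sum>z\<in>B. mexp B t M x z * M z y)"
    by (rule sum.cong[OF refl], rule mexp_cmult(2)[OF assms(1,2)])
  finally show ?thesis unfolding eq .
qed




lemma binom_scalar:
  fixes s :: "nat \<Rightarrow> real"
  shows "(\<Sum>i\<le>k. of_nat (k choose i) * q^i * s (Suc (k - i))) + q * (\<Sum>i\<le>k. of_nat (k choose i) * q^i * s (k - i))
       = (\<Sum>i\<le>Suc k. of_nat (Suc k choose i) * q^i * s (Suc k - i))"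
proof -
  define f where "f j = of_nat (k choose j) * q^j * s (Suc k - j)" for j
  have A: "(\<Sum>j\<le>Suc k. f j) = f 0 + (\<Sum>i\<le>k. f (Suc i))" by (rule sum.atMost_Suc_shift)
  have B: "(\<Sum>j\<le>Suc k. f j) = (\<Sum>j\<le>k. f j)" by (simp add: f_def)
  have C: "(\<Sum>j\<le>k. f j) = (\<Sum>i\<le>k. of_nat (k choose i) * q^i * s (Suc (k - i)))"
    by (rule sum.cong) (auto simp: f_def Suc_diff_le)
  have D: "(\<Sum>i\<le>k. f (Suc i)) = (\<Sum>i\<le>k. of_nat (k choose Suc i) * q^Suc i * s (k - i))"
    by (simp add: f_def)
  have E: "(\<Sum>i\<le>Suc k. of_nat (Suc k choose i) * q^i * s (Suc k - i))
      = s (Suc k) + (\<Sum>i\<le>k. of_nat (Suc k choose Suc i) * q^Suc i * s (k - i))"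
    by (subst sum.atMost_Suc_shift) simp
  have F: "(\<Sum>i\<le>k. of_nat (Suc k choose Suc i) * q^Suc i * s (k - i))
     = (\<Sum>i\<le>k. of_nat (k choose i) * q^Suc i * s (k - i)) + (\<Sum>i\<le>k. of_nat (k choose Suc i) * q^Suc i * s (k - i))"
    by (simp add: sum.distrib[symmetric] distrib_right)
  have G: "q * (\<Sum>i\<le>k. of_nat (k choose i) * q^i * s (k - i)) = (\<Sum>i\<le>k. of_nat (k choose i) * q^Suc i * s (k - i))"
    by (simp add: sum_distrib_left mult_ac)
  have "f 0 = s (Suc k)" by (simp add: f_def)
  then show ?thesis using A B C D E F G by linarith
qed

definition shiftM :: "('a \<Rightarrow> 'a \<Rightarrow> real) \<Rightarrow> real \<Rightarrow> 'a \<Rightarrow> 'a \<Rightarrow> real" where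
  "shiftM M q u v = M u v + (if u = v then q else 0)"

lemma mpow_shift:
  assumes "finite B" "x \<in> B"
  shows "mpow B (shiftM M q) k x y = (\<Sum>i\<le>k. of_nat (k choose i) * q^i * mpow B M (k - i) x y)"
  using assms(2)
proof (induction k arbitrary: x)
  case 0 then show ?case by simp
next
  case (Suc k)
  have "mpow B (shiftM M q) (Suc k) x y = (\<Sum>z\<in>B. M x z * mpow B (shiftM M q) k z y)
        + (\<Sum>z\<in>B. (if x = z then q else 0) * mpow B (shiftM M q) k z y)"
    by (simp add: shiftM_def distrib_right sum.distrib)
  also have "(\<Sum>z\<in>B. (if x = z then q else 0) * mpow B (shiftM M q) k z y) = (\<Sum>z\<in>B. if x = z then q * mpow B (shiftM M q) k z y else 0)"
    by (rule sum.cong) auto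
  also have "\<dots> = q * mpow B (shiftM M q) k x y" using Suc.prems assms by simp
  also have "(\<Sum>z\<in>B. M x z * mpow B (shiftM M q) k z y) = (\<Sum>z\<in>B. \<Sum>i\<le>k. M x z * (of_nat (k choose i) * q^i * mpow B M (k - i) z y))"
    by (rule sum.cong[OF refl]) (simp add: Suc.IH sum_distrib_left)
  also have "\<dots> = (\<Sum>i\<le>k. \<Sum>z\<in>B. M x z * (of_nat (k choose i) * q^i * mpow B M (k - i) z y))"
    by (rule sum.swap)
  also have "\<dots> = (\<Sum>i\<le>k. of_nat (k choose i) * q^i * mpow B M (Suc (k - i)) x y)"
    by (rule sum.cong[OF refl]) (simp add: sum_distrib_left mult_ac)
  finally show ?case using binom_scalar[of k q "\<lambda>j. mpow B M j x y"] Suc by (simp add: Suc.IH)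
qed

lemma mexp_shift:
  assumes "finite B" "x \<in> B"
  shows "mexp B t (shiftM M q) x y = exp (q * t) * mexp B t M x y"
proof -
  define a where "a i = (q*t)^i / fact i" for i :: nat
  define b where "b j = t^j / fact j * mpow B M j x y" for j
  have ea: "exp (q * t) = (\<Sum>i. a i)"
    unfolding exp_def a_def by (simp add: divide_inverse mult_ac)
  have na: "summable (\<lambda>i. norm (a i))"
    using summable_norm_exp[of "q*t"] by (simp add: a_def divide_inverse mult_ac)
  have nb: "summable (\<lambda>i. norm (b i))" unfolding b_def by (rule mexp_summable(2)[OF assms])
  have "exp (q * t) * mexp B t M x y = (\<Sum>k. \<Sum>i\<le>k. a i * b (k - i))"
    unfolding ea mexp_def b_def[symmetric] by (rule Cauchy_product[OF na nb])
  also have "\<dots> = (\<Sum>k. t^k / fact k * mpow B (shiftM M q) k x y)"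
  proof (rule suminf_cong)
    fix k
    have "(\<Sum>i\<le>k. a i * b (k - i)) = (\<Sum>i\<le>k. t^k / fact k * (of_nat (k choose i) * q^i * mpow B M (k - i) x y))"
    proof (rule sum.cong[OF refl])
      fix i assume "i \<in> {..k}"
      then have ik: "i \<le> k" by simp
      have tt: "t^i * t^(k-i) = t^k" using ik by (simp add: power_add[symmetric])
      have "a i * b (k - i) = (q^i * (t^i * t^(k-i))) * mpow B M (k - i) x y / (fact i * fact (k - i))"
        by (simp add: a_def b_def power_mult_distrib field_simps)
      also have "\<dots> = t^k / fact k * (of_nat (k choose i) * q^i * mpow B M (k - i) x y)"
        unfolding tt binomial_fact[OF ik] by (simp add: field_simps)
      finally show "a i * b (k - i) = t^k / fact k * (of_nat (k choose i) * q^i * mpow B M (k - i) x y)" .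
    qed
    also have "\<dots> = t^k / fact k * mpow B (shiftM M q) k x y"
      by (simp add: mpow_shift[OF assms] sum_distrib_left)
    finally show "(\<Sum>i\<le>k. a i * b (k - i)) = t^k / fact k * mpow B (shiftM M q) k x y" .
  qed
  finally show ?thesis unfolding mexp_def by simp
qed

lemma mpow_nonneg:
  assumes "\<forall>u\<in>B. \<forall>v\<in>B. M u v \<ge> 0" "x \<in> B"
  shows "mpow B M k x y \<ge> 0"
  using assms(2)
  by (induction k arbitrary: x) (auto intro!: sum_nonneg mult_nonneg_nonneg simp: assms(1))

lemma mexp_nonneg:
  assumes "finite B" "\<forall>u\<in>B. \<forall>v\<in>B. M u v \<ge> 0" "x \<in> B" "t \<ge> 0"
  shows "mexp B t M x y \<ge> 0"
  unfolding mexp_def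
proof (rule suminf_nonneg[OF mexp_summable(1)[OF assms(1,3)]])
  fix n
  have "0 \<le> t^n/fact n" using assms(4) by simp
  then show "0 \<le> t^n/fact n * mpow B M n x y"
    using mpow_nonneg[OF assms(2,3)] by (rule mult_nonneg_nonneg)
qed

lemma mpow_mono:
  assumes "finite B'" "B \<subseteq> B'" "\<forall>u\<in>B'. \<forall>v\<in>B'. M u v \<ge> 0" "x \<in> B"
  shows "mpow B M k x y \<le> mpow B' M k x y"
  using assms(4)
proof (induction k arbitrary: x)
  case 0 then show ?case by simp
next
  case (Suc k)
  have fB: "finite B" using assms finite_subset by blast
  have "mpow B M (Suc k) x y = (\<Sum>z\<in>B. M x z * mpow B M k z y)" by simp
  also have "\<dots> \<le> (\<Sum>z\<in>B. M x z * mpow B' M k z y)"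
    by (intro sum_mono mult_left_mono Suc.IH) (use assms Suc.prems in auto)
  also have "\<dots> \<le> (\<Sum>z\<in>B'. M x z * mpow B' M k z y)"
    by (rule sum_mono2[OF assms(1,2)]) (use assms Suc.prems in \<open>auto intro!: mult_nonneg_nonneg mpow_nonneg[OF assms(3)]\<close>)
  finally show ?case by simp
qed

lemma mexp_mono:
  assumes "finite B'" "B \<subseteq> B'" "\<forall>u\<in>B'. \<forall>v\<in>B'. M u v \<ge> 0" "x \<in> B" "t \<ge> 0"
  shows "mexp B t M x y \<le> mexp B' t M x y"
proof -
  have fB: "finite B" using assms finite_subset by blast
  show ?thesis unfolding mexp_def
  proof (rule suminf_le[OF _ mexp_summable(1)[OF fB assms(4)] mexp_summable(1)[OF assms(1) subsetD[OF assms(2,4)]]])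
    fix n
    have "0 \<le> t^n/fact n" using assms(5) by simp
    then show "t^n/fact n * mpow B M n x y \<le> t^n/fact n * mpow B' M n x y"
      using mpow_mono[OF assms(1-4)] by (rule mult_left_mono[rotated])
  qed
qed

lemma mexp_rowsum:
  assumes "finite B" "\<forall>z\<in>B. (\<Sum>y\<in>B. M z y) = 0" "x \<in> B"
  shows "(\<Sum>y\<in>B. mexp B t M x y) = 1"
proof -
  have r: "(\<Sum>y\<in>B. mpow B M (Suc k) x y) = 0" for k
  proof -
    have "(\<Sum>y\<in>B. mpow B M (Suc k) x y) = (\<Sum>y\<in>B. \<Sum>z\<in>B. mpow B M k x z * M z y)"
      by (rule sum.cong[OF refl]) (rule mpow_Suc_right[OF assms(1,3)])
    also have "\<dots> = (\<Sum>z\<in>B. \<Sum>y\<in>B. mpow B M k x z * M z y)" by (rule sum.swap)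
    also have "\<dots> = (\<Sum>z\<in>B. mpow B M k x z * (\<Sum>y\<in>B. M z y))" by (simp add: sum_distrib_left)
    also have "\<dots> = 0" using assms(2) by simp
    finally show ?thesis .
  qed
  have "(\<Sum>y\<in>B. mexp B t M x y) = (\<Sum>n. \<Sum>y\<in>B. t^n/fact n * mpow B M n x y)"
    unfolding mexp_def by (rule suminf_sum[symmetric]) (rule mexp_summable(1)[OF assms(1,3)])
  also have "\<dots> = (\<Sum>n\<in>{0}. \<Sum>y\<in>B. t^n/fact n * mpow B M n x y)"
  proof (rule suminf_finite)
    fix n :: nat assume "n \<notin> {0}"
    then obtain k where "n = Suc k" by (cases n) auto
    then show "(\<Sum>y\<in>B. t^n/fact n * mpow B M n x y) = 0"
      using r[of k] by (simp only: sum_distrib_left[symmetric])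
  qed simp
  also have "\<dots> = 1" using assms by simp
  finally show ?thesis .
qed

lemma mexp_colsum:
  assumes "finite B" "\<forall>y\<in>B. (\<Sum>x\<in>B. \<nu> x * M x y) = 0" "y \<in> B"
  shows "(\<Sum>x\<in>B. \<nu> x * mexp B t M x y) = \<nu> y"
proof -
  have r: "(\<Sum>x\<in>B. \<nu> x * mpow B M (Suc k) x y) = 0" for k
  proof -
    have "(\<Sum>x\<in>B. \<nu> x * mpow B M (Suc k) x y) = (\<Sum>x\<in>B. \<Sum>z\<in>B. \<nu> x * M x z * mpow B M k z y)"
      by (simp add: sum_distrib_left mult_ac)
    also have "\<dots> = (\<Sum>z\<in>B. \<Sum>x\<in>B. \<nu> x * M x z * mpow B M k z y)" by (rule sum.swap)
    also have "\<dots> = (\<Sum>z\<in>B. (\<Sum>x\<in>B. \<nu> x * M x z) * mpow B M k z y)" by (simp add: sum_distrib_right)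
    also have "\<dots> = 0" using assms(2) by simp
    finally show ?thesis .
  qed
  have s: "\<And>x. x \<in> B \<Longrightarrow> summable (\<lambda>n. \<nu> x * (t^n/fact n * mpow B M n x y))"
    by (intro summable_mult mexp_summable(1)[OF assms(1)])
  have "(\<Sum>x\<in>B. \<nu> x * mexp B t M x y) = (\<Sum>x\<in>B. \<Sum>n. \<nu> x * (t^n/fact n * mpow B M n x y))"
    by (rule sum.cong[OF refl], rule mexp_cmult(1)[OF assms(1), symmetric], simp)
  also have "\<dots> = (\<Sum>n. \<Sum>x\<in>B. \<nu> x * (t^n/fact n * mpow B M n x y))"
    by (rule suminf_sum[symmetric]) (rule s)
  also have "\<dots> = (\<Sum>n\<in>{0}. \<Sum>x\<in>B. \<nu> x * (t^n/fact n * mpow B M n x y))"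
  proof (rule suminf_finite)
    fix n :: nat assume "n \<notin> {0}"
    then obtain k where "n = Suc k" by (cases n) auto
    then show "(\<Sum>x\<in>B. \<nu> x * (t^n/fact n * mpow B M n x y)) = 0"
    proof -
      have "(\<Sum>x\<in>B. \<nu> x * (t^n/fact n * mpow B M n x y)) = t^n/fact n * (\<Sum>x\<in>B. \<nu> x * mpow B M n x y)"
        by (simp add: sum_distrib_left mult_ac del: mpow.simps)
      then show ?thesis using r[of k] \<open>n = Suc k\<close> by (simp only:)
    qed
  qed simp
  also have "\<dots> = \<nu> y"
  proof -
    have "(\<Sum>x\<in>B. \<nu> x * (if x = y then 1 else 0)) = (\<Sum>x\<in>B. if y = x then \<nu> x else 0)"
      by (rule sum.cong) auto
    then show ?thesis using assms by simp
  qed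
  finally show ?thesis .
qed




locale chain =
  fixes \<Omega> :: "'a set" and R :: "'a \<Rightarrow> 'a \<Rightarrow> real" and \<nu> \<mu> :: "'a \<Rightarrow> real" and A :: "'a set"
  assumes fin: "finite \<Omega>" and ne: "\<Omega> \<noteq> {}"
    and rates: "\<forall>x\<in>\<Omega>. \<forall>y\<in>\<Omega>. R x y \<ge> 0 \<and> R x x = 0"
    and irr: "irreducible \<Omega> R"
    and stat: "stationary \<Omega> R \<nu>"
    and AO: "A \<subseteq> \<Omega>"
    and mu: "is_prob \<Omega> \<mu>"
begin

abbreviation "L \<equiv> gen \<Omega> R"
abbreviation "B \<equiv> \<Omega> - A"

lemma finB: "finite B" using fin by simp

lemma R_nonneg: "x \<in> \<Omega> \<Longrightarrow> y \<in> \<Omega> \<Longrightarrow> R x y \<ge> 0" using rates by auto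
lemma R_diag: "x \<in> \<Omega> \<Longrightarrow> R x x = 0" using rates by auto

lemma nu_nonneg: "x \<in> \<Omega> \<Longrightarrow> \<nu> x \<ge> 0" using stat unfolding stationary_def is_prob_def by auto
lemma nu_sum: "(\<Sum>x\<in>\<Omega>. \<nu> x) = 1" using stat unfolding stationary_def is_prob_def by auto
lemma nu_stat: "y \<in> \<Omega> \<Longrightarrow> (\<Sum>x\<in>\<Omega>. \<nu> x * L x y) = 0" using stat unfolding stationary_def by auto
lemma mu_nonneg: "x \<in> \<Omega> \<Longrightarrow> \<mu> x \<ge> 0" using mu unfolding is_prob_def by auto
lemma mu_sum: "(\<Sum>x\<in>\<Omega>. \<mu> x) = 1" using mu unfolding is_prob_def by auto

lemma gen_alt: "x \<in> \<Omega> \<Longrightarrow> L x y = R x y - (if x = y then (\<Sum>z\<in>\<Omega>. R x z) else 0)"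
proof -
  assume x: "x \<in> \<Omega>"
  have "(\<Sum>z\<in>\<Omega>. R x z) = R x x + (\<Sum>z\<in>\<Omega> - {x}. R x z)" using x fin by (simp add: sum.remove)
  then show ?thesis using R_diag[OF x] unfolding gen_def by auto
qed

lemma gen_rowsum: "x \<in> \<Omega> \<Longrightarrow> (\<Sum>y\<in>\<Omega>. L x y) = 0"
proof -
  assume x: "x \<in> \<Omega>"
  have "(\<Sum>y\<in>\<Omega>. L x y) = L x x + (\<Sum>y\<in>\<Omega> - {x}. L x y)" using x fin by (simp add: sum.remove)
  also have "(\<Sum>y\<in>\<Omega> - {x}. L x y) = (\<Sum>y\<in>\<Omega> - {x}. R x y)" by (rule sum.cong) (auto simp: gen_def)
  finally show ?thesis by (simp add: gen_def)
qed

lemma gen_rowsum_B: "z \<in> B \<Longrightarrow> (\<Sum>y\<in>B. L z y) = - rate_to R z A"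
proof -
  assume z: "z \<in> B"
  have "(\<Sum>y\<in>B. L z y) = (\<Sum>y\<in>B. R z y) - (\<Sum>w\<in>\<Omega>. R z w)"
  proof -
    have "(\<Sum>y\<in>B. L z y) = (\<Sum>y\<in>B. R z y - (if z = y then (\<Sum>w\<in>\<Omega>. R z w) else 0))"
      by (rule sum.cong) (use z gen_alt in auto)
    also have "\<dots> = (\<Sum>y\<in>B. R z y) - (\<Sum>y\<in>B. (if z = y then (\<Sum>w\<in>\<Omega>. R z w) else 0))"
      by (simp add: sum_subtractf)
    also have "(\<Sum>y\<in>B. (if z = y then (\<Sum>w\<in>\<Omega>. R z w) else 0)) = (\<Sum>w\<in>\<Omega>. R z w)"
      using z finB by simp
    finally show ?thesis .
  qed
  also have "(\<Sum>w\<in>\<Omega>. R z w) = (\<Sum>y\<in>B. R z y) + (\<Sum>y\<in>A. R z y)"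
    using sum.subset_diff[OF AO fin, of "R z"] by simp
  finally show ?thesis unfolding rate_to_def by simp
qed

lemma nu_pos: "x \<in> \<Omega> \<Longrightarrow> \<nu> x > 0"
proof (rule ccontr)
  assume x0: "x \<in> \<Omega>" and "\<not> \<nu> x > 0"
  then have nx: "\<nu> x = 0" using nu_nonneg[OF x0] by simp
  define E where "E = {(u, v). u \<in> \<Omega> \<and> v \<in> \<Omega> \<and> u \<noteq> v \<and> R u v > 0}"
  have stp: "\<nu> u = 0" if uv: "(u, v) \<in> E" and nv: "\<nu> v = 0" for u v
  proof -
    have u: "u \<in> \<Omega>" and v: "v \<in> \<Omega>" and uv': "u \<noteq> v" and Ruv: "R u v > 0" using uv by (auto simp: E_def)
    have "0 = (\<Sum>w\<in>\<Omega>. \<nu> w * L w v)" using nu_stat[OF v] by simp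
    also have "\<dots> = \<nu> v * L v v + (\<Sum>w\<in>\<Omega> - {v}. \<nu> w * L w v)" using v fin by (simp add: sum.remove)
    also have "(\<Sum>w\<in>\<Omega> - {v}. \<nu> w * L w v) = (\<Sum>w\<in>\<Omega> - {v}. \<nu> w * R w v)"
      by (rule sum.cong) (auto simp: gen_def)
    finally have s0: "(\<Sum>w\<in>\<Omega> - {v}. \<nu> w * R w v) = 0" using nv by simp
    have "\<forall>w\<in>\<Omega> - {v}. \<nu> w * R w v = 0"
      using iffD1[OF sum_nonneg_eq_0_iff s0] fin nu_nonneg R_nonneg v by (auto intro!: mult_nonneg_nonneg)
    then have "\<nu> u * R u v = 0" using u uv' by auto
    then show ?thesis using Ruv by simp
  qed
  have all0: "\<nu> z = 0" if z: "z \<in> \<Omega>" for z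
  proof -
    have "(z, x) \<in> E\<^sup>*" using irr z x0 unfolding irreducible_def E_def by blast
    then show ?thesis
    proof (induction rule: converse_rtrancl_induct)
      case base then show ?case by (rule nx)
    next
      case (step y z) then show ?case using stp by blast
    qed
  qed
  have "(\<Sum>z\<in>\<Omega>. \<nu> z) = 0" using all0 by simp
  then show False using nu_sum by simp
qed

definition qq :: real where "qq = (\<Sum>u\<in>\<Omega>. \<Sum>v\<in>\<Omega>. R u v)"

lemma shift_nonneg: "\<forall>u\<in>\<Omega>. \<forall>v\<in>\<Omega>. shiftM L qq u v \<ge> 0"
proof (intro ballI)
  fix u v assume u: "u \<in> \<Omega>" and v: "v \<in> \<Omega>"
  show "shiftM L qq u v \<ge> 0"
  proof (cases "u = v")
    case True
    have "(\<Sum>z\<in>\<Omega>. R u z) \<le> qq" unfolding qq_def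
      using member_le_sum[of u \<Omega> "\<lambda>u. \<Sum>v\<in>\<Omega>. R u v"] u fin R_nonneg by (auto intro: sum_nonneg)
    then show ?thesis using True u R_nonneg[OF u u] by (simp add: shiftM_def gen_alt)
  next
    case False then show ?thesis using u v R_nonneg by (simp add: shiftM_def gen_def)
  qed
qed

lemma mexp_gen_eq: "x \<in> S \<Longrightarrow> finite S \<Longrightarrow> mexp S t L x y = exp (- (qq * t)) * mexp S t (shiftM L qq) x y"
  using mexp_shift[of S x t L qq y] by (simp add: exp_minus field_simps)

lemma P_nonneg: "x \<in> \<Omega> \<Longrightarrow> t \<ge> 0 \<Longrightarrow> mexp \<Omega> t L x y \<ge> 0"
  by (simp add: mexp_gen_eq fin mexp_nonneg shift_nonneg)

lemma K_nonneg: "x \<in> B \<Longrightarrow> t \<ge> 0 \<Longrightarrow> mexp B t L x y \<ge> 0"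
  using shift_nonneg by (simp add: mexp_gen_eq finB mexp_nonneg)

lemma K_le_P: "x \<in> B \<Longrightarrow> t \<ge> 0 \<Longrightarrow> mexp B t L x y \<le> mexp \<Omega> t L x y"
proof -
  assume x: "x \<in> B" and t: "t \<ge> 0"
  have "mexp B t (shiftM L qq) x y \<le> mexp \<Omega> t (shiftM L qq) x y"
    by (rule mexp_mono[OF fin _ shift_nonneg x t]) auto
  then show ?thesis using x by (simp add: mexp_gen_eq finB fin)
qed

lemma P_rowsum: "x \<in> \<Omega> \<Longrightarrow> (\<Sum>y\<in>\<Omega>. mexp \<Omega> t L x y) = 1"
  by (rule mexp_rowsum[OF fin]) (use gen_rowsum in auto)

lemma P_colsum: "y \<in> \<Omega> \<Longrightarrow> (\<Sum>x\<in>\<Omega>. \<nu> x * mexp \<Omega> t L x y) = \<nu> y"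
  by (rule mexp_colsum[OF fin]) (use nu_stat in auto)

lemma mexp_deriv_left:
  assumes "finite S" "x \<in> S"
  shows "((\<lambda>t. mexp S t M x y) has_real_derivative (\<Sum>z\<in>S. M x z * mexp S t M z y)) (at t)"
  using mexp_deriv_raw[OF assms] mexp_Suc_left(1)[OF assms] by simp

lemma mexp_deriv_right:
  assumes "finite S" "x \<in> S" "y \<in> S"
  shows "((\<lambda>t. mexp S t M x y) has_real_derivative (\<Sum>z\<in>S. mexp S t M x z * M z y)) (at t)"
proof -
  have "((\<lambda>t. mexp S t M x y) has_real_derivative (\<Sum>n. t^n/fact n * mpow S M (Suc n) x y)) (at t)"
    by (rule mexp_deriv_raw[OF assms(1,2)])
  then show ?thesis by (simp only: mexp_Suc_right[OF assms])
qed

end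



context chain begin

definition Ef :: "('a \<Rightarrow> real) \<Rightarrow> real" where
  "Ef \<phi> = (\<Sum>x\<in>\<Omega>. \<Sum>y\<in>\<Omega>. \<nu> x * L x y * \<phi> x * \<phi> y)"

definition evo :: "real \<Rightarrow> ('a \<Rightarrow> real) \<Rightarrow> 'a \<Rightarrow> real" where
  "evo t g x = (\<Sum>y\<in>\<Omega>. mexp \<Omega> t L x y * g y)"

lemma evo_deriv:
  assumes x: "x \<in> \<Omega>"
  shows "((\<lambda>t. evo t g x) has_real_derivative (\<Sum>z\<in>\<Omega>. L x z * evo t g z)) (at t)"
proof -
  have "((\<lambda>t. \<Sum>y\<in>\<Omega>. mexp \<Omega> t L x y * g y) has_real_derivative
          (\<Sum>y\<in>\<Omega>. (\<Sum>z\<in>\<Omega>. L x z * mexp \<Omega> t L z y) * g y)) (at t)"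
    by (intro DERIV_sum DERIV_cmult_right mexp_deriv_left fin x)
  also have "(\<Sum>y\<in>\<Omega>. (\<Sum>z\<in>\<Omega>. L x z * mexp \<Omega> t L z y) * g y) = (\<Sum>z\<in>\<Omega>. L x z * evo t g z)"
  proof -
    have "(\<Sum>y\<in>\<Omega>. (\<Sum>z\<in>\<Omega>. L x z * mexp \<Omega> t L z y) * g y) = (\<Sum>y\<in>\<Omega>. \<Sum>z\<in>\<Omega>. L x z * (mexp \<Omega> t L z y * g y))"
      by (simp add: sum_distrib_right sum_distrib_left mult_ac)
    also have "\<dots> = (\<Sum>z\<in>\<Omega>. \<Sum>y\<in>\<Omega>. L x z * (mexp \<Omega> t L z y * g y))" by (rule sum.swap)
    finally show ?thesis unfolding evo_def by (simp add: sum_distrib_left)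
  qed
  finally show ?thesis unfolding evo_def .
qed

lemma evo_mean: "(\<Sum>x\<in>\<Omega>. \<nu> x * evo t g x) = (\<Sum>x\<in>\<Omega>. \<nu> x * g x)"
proof -
  have "(\<Sum>x\<in>\<Omega>. \<nu> x * evo t g x) = (\<Sum>x\<in>\<Omega>. \<Sum>y\<in>\<Omega>. \<nu> x * mexp \<Omega> t L x y * g y)"
    unfolding evo_def by (simp add: sum_distrib_left mult_ac)
  also have "\<dots> = (\<Sum>y\<in>\<Omega>. \<Sum>x\<in>\<Omega>. \<nu> x * mexp \<Omega> t L x y * g y)" by (rule sum.swap)
  also have "\<dots> = (\<Sum>y\<in>\<Omega>. (\<Sum>x\<in>\<Omega>. \<nu> x * mexp \<Omega> t L x y) * g y)" by (simp add: sum_distrib_right)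
  also have "\<dots> = (\<Sum>y\<in>\<Omega>. \<nu> y * g y)" by (rule sum.cong[OF refl]) (simp add: P_colsum)
  finally show ?thesis .
qed

lemma evo_zero: "x \<in> \<Omega> \<Longrightarrow> evo 0 g x = g x"
proof -
  assume x: "x \<in> \<Omega>"
  have "evo 0 g x = (\<Sum>y\<in>\<Omega>. if x = y then g y else 0)"
    unfolding evo_def mexp_zero by (rule sum.cong) auto
  then show ?thesis using x fin by simp
qed

lemma decay:
  assumes poinc: "\<forall>\<phi>. (\<Sum>x\<in>\<Omega>. \<nu> x * \<phi> x) = 0 \<longrightarrow> \<gamma> * (\<Sum>x\<in>\<Omega>. \<nu> x * (\<phi> x)\<^sup>2) \<le> - Ef \<phi>"
    and gm: "(\<Sum>x\<in>\<Omega>. \<nu> x * g x) = 0" and t: "t \<ge> 0"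
  shows "(\<Sum>x\<in>\<Omega>. \<nu> x * (evo t g x)\<^sup>2) \<le> exp (- (2*\<gamma>*t)) * (\<Sum>x\<in>\<Omega>. \<nu> x * (g x)\<^sup>2)"
proof -
  define D where "D s = exp (2*\<gamma>*s) * (\<Sum>x\<in>\<Omega>. \<nu> x * (evo s g x * evo s g x))" for s
  have dD: "(D has_real_derivative exp (2*\<gamma>*s) * (2*\<gamma>) * (\<Sum>x\<in>\<Omega>. \<nu> x * (evo s g x * evo s g x))
        + (\<Sum>x\<in>\<Omega>. \<nu> x * ((\<Sum>z\<in>\<Omega>. L x z * evo s g z) * evo s g x + (\<Sum>z\<in>\<Omega>. L x z * evo s g z) * evo s g x)) * exp (2*\<gamma>*s)) (at s)" for s
    unfolding D_def
  proof (rule DERIV_mult)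
    show "((\<lambda>s. exp (2*\<gamma>*s)) has_real_derivative exp (2*\<gamma>*s) * (2*\<gamma>)) (at s)"
      by (auto intro!: derivative_eq_intros)
    show "((\<lambda>s. \<Sum>x\<in>\<Omega>. \<nu> x * (evo s g x * evo s g x)) has_real_derivative
        (\<Sum>x\<in>\<Omega>. \<nu> x * ((\<Sum>z\<in>\<Omega>. L x z * evo s g z) * evo s g x + (\<Sum>z\<in>\<Omega>. L x z * evo s g z) * evo s g x))) (at s)"
      by (intro DERIV_sum DERIV_cmult DERIV_mult evo_deriv)
  qed
  have neg: "exp (2*\<gamma>*s) * (2*\<gamma>) * (\<Sum>x\<in>\<Omega>. \<nu> x * (evo s g x * evo s g x))
        + (\<Sum>x\<in>\<Omega>. \<nu> x * ((\<Sum>z\<in>\<Omega>. L x z * evo s g z) * evo s g x + (\<Sum>z\<in>\<Omega>. L x z * evo s g z) * evo s g x)) * exp (2*\<gamma>*s) \<le> 0" for s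
  proof -
    have m: "(\<Sum>x\<in>\<Omega>. \<nu> x * evo s g x) = 0" using evo_mean gm by simp
    have p: "\<gamma> * (\<Sum>x\<in>\<Omega>. \<nu> x * (evo s g x)\<^sup>2) \<le> - Ef (evo s g)" using poinc m by blast
    have e: "(\<Sum>x\<in>\<Omega>. \<nu> x * ((\<Sum>z\<in>\<Omega>. L x z * evo s g z) * evo s g x + (\<Sum>z\<in>\<Omega>. L x z * evo s g z) * evo s g x))
        = 2 * Ef (evo s g)"
      unfolding Ef_def by (simp add: sum_distrib_left sum_distrib_right sum.distrib[symmetric] mult_ac)
    have "exp (2*\<gamma>*s) * (2*\<gamma>) * (\<Sum>x\<in>\<Omega>. \<nu> x * (evo s g x * evo s g x))
        + 2 * Ef (evo s g) * exp (2*\<gamma>*s) = 2 * exp (2*\<gamma>*s) * (\<gamma> * (\<Sum>x\<in>\<Omega>. \<nu> x * (evo s g x)\<^sup>2) + Ef (evo s g))"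
      by (simp add: power2_eq_square algebra_simps)
    also have "\<dots> \<le> 0" using p by (intro mult_nonneg_nonpos) auto
    finally show ?thesis unfolding e .
  qed
  have "D t \<le> D 0"
    by (rule DERIV_nonpos_imp_nonincreasing[OF t]) (use dD neg in blast)
  also have "D 0 = (\<Sum>x\<in>\<Omega>. \<nu> x * (g x)\<^sup>2)"
    unfolding D_def by (simp add: evo_zero power2_eq_square)
  finally have "exp (2*\<gamma>*t) * (\<Sum>x\<in>\<Omega>. \<nu> x * (evo t g x)\<^sup>2) \<le> (\<Sum>x\<in>\<Omega>. \<nu> x * (g x)\<^sup>2)"
    unfolding D_def by (simp add: power2_eq_square)
  then have "exp (- (2*\<gamma>*t)) * (exp (2*\<gamma>*t) * (\<Sum>x\<in>\<Omega>. \<nu> x * (evo t g x)\<^sup>2)) \<le> exp (- (2*\<gamma>*t)) * (\<Sum>x\<in>\<Omega>. \<nu> x * (g x)\<^sup>2)"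
    by (rule mult_left_mono) simp
  then show ?thesis by (simp add: exp_minus field_simps)
qed

end



context chain begin

definition ff :: "'a \<Rightarrow> real" where
  "ff x = (if x \<notin> A then 1 else 0) * rate_to R x A"

definition cc :: real where "cc = (\<Sum>x\<in>\<Omega>. \<nu> x * ff x)"

definition Hf :: "real \<Rightarrow> real" where
  "Hf t = 1 - (\<Sum>x\<in>B. \<mu> x * (\<Sum>y\<in>B. mexp B t L x y))"

lemma ff_nonneg: "x \<in> \<Omega> \<Longrightarrow> ff x \<ge> 0"
  unfolding ff_def rate_to_def using AO R_nonneg by (auto intro!: sum_nonneg)

lemma ff_B: "z \<in> B \<Longrightarrow> ff z = rate_to R z A" unfolding ff_def by simp

lemma Hf_deriv: "(Hf has_real_derivative (\<Sum>x\<in>B. \<mu> x * (\<Sum>z\<in>B. mexp B t L x z * ff z))) (at t)"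
proof -
  have d: "((\<lambda>t. \<Sum>x\<in>B. \<mu> x * (\<Sum>y\<in>B. mexp B t L x y)) has_real_derivative
       (\<Sum>x\<in>B. \<mu> x * (\<Sum>y\<in>B. \<Sum>z\<in>B. mexp B t L x z * L z y))) (at t)"
    by (intro DERIV_sum DERIV_cmult mexp_deriv_right finB) auto
  have e: "(\<Sum>y\<in>B. \<Sum>z\<in>B. mexp B t L x z * L z y) = - (\<Sum>z\<in>B. mexp B t L x z * ff z)" for x
  proof -
    have "(\<Sum>y\<in>B. \<Sum>z\<in>B. mexp B t L x z * L z y) = (\<Sum>z\<in>B. \<Sum>y\<in>B. mexp B t L x z * L z y)" by (rule sum.swap)
    also have "\<dots> = (\<Sum>z\<in>B. mexp B t L x z * (\<Sum>y\<in>B. L z y))" by (simp add: sum_distrib_left)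
    also have "\<dots> = (\<Sum>z\<in>B. - (mexp B t L x z * ff z))"
      by (rule sum.cong[OF refl]) (simp add: gen_rowsum_B ff_B)
    finally show ?thesis by (simp add: sum_negf)
  qed
  have "(Hf has_real_derivative 0 - (\<Sum>x\<in>B. \<mu> x * (\<Sum>y\<in>B. \<Sum>z\<in>B. mexp B t L x z * L z y))) (at t)"
    unfolding Hf_def by (intro DERIV_diff DERIV_const d)
  then show ?thesis by (simp add: e sum_negf)
qed

lemma Hf_deriv_nonneg: "t \<ge> 0 \<Longrightarrow> (\<Sum>x\<in>B. \<mu> x * (\<Sum>z\<in>B. mexp B t L x z * ff z)) \<ge> 0"
  by (intro sum_nonneg mult_nonneg_nonneg mu_nonneg K_nonneg ff_nonneg) auto

lemma Hf_zero: "Hf 0 = meas \<mu> A"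
proof -
  have "(\<Sum>x\<in>B. \<mu> x * (\<Sum>y\<in>B. mexp B 0 L x y)) = (\<Sum>x\<in>B. \<mu> x)"
  proof (rule sum.cong[OF refl])
    fix x assume x: "x \<in> B"
    have "(\<Sum>y\<in>B. mexp B 0 L x y) = (\<Sum>y\<in>B. if x = y then 1 else 0)" by (simp add: mexp_zero)
    also have "\<dots> = 1" using x finB by simp
    finally show "\<mu> x * (\<Sum>y\<in>B. mexp B 0 L x y) = \<mu> x" by simp
  qed
  moreover have "(\<Sum>x\<in>\<Omega>. \<mu> x) = (\<Sum>x\<in>B. \<mu> x) + (\<Sum>x\<in>A. \<mu> x)"
    using sum.subset_diff[OF AO fin, of \<mu>] by simp
  ultimately show ?thesis unfolding Hf_def meas_def using mu_sum by simp
qed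

lemma Hf_lower: "S \<ge> 0 \<Longrightarrow> Hf S \<ge> meas \<mu> A"
proof -
  assume S: "S \<ge> 0"
  have "Hf 0 \<le> Hf S"
  proof (rule DERIV_nonneg_imp_nondecreasing[of 0 S Hf, OF S])
    fix x :: real assume "0 \<le> x"
    then show "\<exists>y. (Hf has_real_derivative y) (at x) \<and> y \<ge> 0"
      using Hf_deriv Hf_deriv_nonneg by blast
  qed
  then show ?thesis using Hf_zero by simp
qed

lemma meas_mu_nonneg: "meas \<mu> A \<ge> 0"
  unfolding meas_def using AO mu_nonneg by (auto intro!: sum_nonneg)

lemma sq_sqrt: "v \<ge> 0 \<Longrightarrow> (sqrt v * a)\<^sup>2 = v * a\<^sup>2"
  by (simp add: power_mult_distrib)

lemma CS:
  "(\<Sum>x\<in>\<Omega>. \<mu> x * \<phi> x) \<le> L2norm \<Omega> \<nu> (\<lambda>x. \<mu> x / \<nu> x) * sqrt (\<Sum>x\<in>\<Omega>. \<nu> x * (\<phi> x)\<^sup>2)"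
proof -
  define F where "F x = sqrt (\<nu> x) * (\<mu> x / \<nu> x)" for x
  define G where "G x = sqrt (\<nu> x) * \<phi> x" for x
  have "(\<Sum>x\<in>\<Omega>. \<mu> x * \<phi> x) \<le> (\<Sum>x\<in>\<Omega>. \<bar>F x\<bar> * \<bar>G x\<bar>)"
  proof (rule sum_mono)
    fix x assume x: "x \<in> \<Omega>"
    have nx: "\<nu> x > 0" using nu_pos[OF x] .
    have "\<bar>F x\<bar> * \<bar>G x\<bar> = \<bar>sqrt (\<nu> x) * sqrt (\<nu> x) * (\<mu> x / \<nu> x) * \<phi> x\<bar>"
      unfolding F_def G_def by (simp add: abs_mult mult_ac)
    also have "\<dots> = \<bar>\<mu> x * \<phi> x\<bar>" using nx by simp
    finally show "\<mu> x * \<phi> x \<le> \<bar>F x\<bar> * \<bar>G x\<bar>" by simp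
  qed
  also have "\<dots> \<le> L2_set F \<Omega> * L2_set G \<Omega>" by (rule L2_set_mult_ineq)
  also have "L2_set F \<Omega> = L2norm \<Omega> \<nu> (\<lambda>x. \<mu> x / \<nu> x)"
    unfolding L2_set_def L2norm_def F_def
    by (rule arg_cong[where f=sqrt], rule sum.cong[OF refl], rule sq_sqrt, rule nu_nonneg)
  also have "L2_set G \<Omega> = sqrt (\<Sum>x\<in>\<Omega>. \<nu> x * (\<phi> x)\<^sup>2)"
    unfolding L2_set_def G_def
    by (rule arg_cong[where f=sqrt], rule sum.cong[OF refl], rule sq_sqrt, rule nu_nonneg)
  finally show ?thesis .
qed

lemma P_ff: "x \<in> \<Omega> \<Longrightarrow> (\<Sum>z\<in>\<Omega>. mexp \<Omega> t L x z * ff z) = cc + evo t (\<lambda>z. ff z - cc) x"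
proof -
  assume x: "x \<in> \<Omega>"
  have "(\<Sum>z\<in>\<Omega>. mexp \<Omega> t L x z * ff z) = (\<Sum>z\<in>\<Omega>. mexp \<Omega> t L x z * (ff z - cc) + cc * mexp \<Omega> t L x z)"
    by (rule sum.cong) (simp_all add: algebra_simps)
  also have "\<dots> = (\<Sum>z\<in>\<Omega>. mexp \<Omega> t L x z * (ff z - cc)) + cc * (\<Sum>z\<in>\<Omega>. mexp \<Omega> t L x z)"
    by (simp add: sum.distrib sum_distrib_left)
  finally have "(\<Sum>z\<in>\<Omega>. mexp \<Omega> t L x z * ff z) = (\<Sum>z\<in>\<Omega>. mexp \<Omega> t L x z * (ff z - cc)) + cc * (\<Sum>z\<in>\<Omega>. mexp \<Omega> t L x z)" .
  then show ?thesis using P_rowsum[OF x] unfolding evo_def by simp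
qed

lemma hit_upper:
  assumes gp: "\<gamma> > 0"
    and poinc: "\<forall>\<phi>. (\<Sum>x\<in>\<Omega>. \<nu> x * \<phi> x) = 0 \<longrightarrow> \<gamma> * (\<Sum>x\<in>\<Omega>. \<nu> x * (\<phi> x)\<^sup>2) \<le> - Ef \<phi>"
    and S: "S \<ge> 0"
  shows "Hf S \<le> meas \<mu> A + S * cc + L2norm \<Omega> \<nu> (\<lambda>x. \<mu> x / \<nu> x) * L2norm \<Omega> \<nu> (\<lambda>x. ff x - cc) * ((1 - exp (- (\<gamma> * S))) / \<gamma>)"
proof -
  define nh where "nh = L2norm \<Omega> \<nu> (\<lambda>x. \<mu> x / \<nu> x)"
  define ng where "ng = L2norm \<Omega> \<nu> (\<lambda>x. ff x - cc)"
  define g where "g x = ff x - cc" for x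
  have nh0: "nh \<ge> 0" unfolding nh_def L2norm_def
    by (intro real_sqrt_ge_zero sum_nonneg mult_nonneg_nonneg) (auto simp: nu_nonneg)
  have gm: "(\<Sum>x\<in>\<Omega>. \<nu> x * g x) = 0"
  proof -
    have "(\<Sum>x\<in>\<Omega>. \<nu> x * (ff x - cc)) = (\<Sum>x\<in>\<Omega>. \<nu> x * ff x) - (\<Sum>x\<in>\<Omega>. \<nu> x) * cc"
      by (simp add: right_diff_distrib sum_subtractf sum_distrib_right)
    then show ?thesis unfolding g_def cc_def using nu_sum by simp
  qed
  have bound: "(\<Sum>x\<in>B. \<mu> x * (\<Sum>z\<in>B. mexp B t L x z * ff z)) \<le> cc + nh * ng * exp (- (\<gamma> * t))" if t: "t \<ge> 0" for t
  proof -
    have "(\<Sum>x\<in>B. \<mu> x * (\<Sum>z\<in>B. mexp B t L x z * ff z)) \<le> (\<Sum>x\<in>B. \<mu> x * (\<Sum>z\<in>\<Omega>. mexp \<Omega> t L x z * ff z))"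
    proof (rule sum_mono, rule mult_left_mono)
      fix x assume x: "x \<in> B"
      have "(\<Sum>z\<in>B. mexp B t L x z * ff z) \<le> (\<Sum>z\<in>B. mexp \<Omega> t L x z * ff z)"
        by (intro sum_mono mult_right_mono K_le_P ff_nonneg) (use x t in auto)
      also have "\<dots> \<le> (\<Sum>z\<in>\<Omega>. mexp \<Omega> t L x z * ff z)"
        by (rule sum_mono2[OF fin]) (use x t in \<open>auto intro!: mult_nonneg_nonneg P_nonneg ff_nonneg\<close>)
      finally show "(\<Sum>z\<in>B. mexp B t L x z * ff z) \<le> (\<Sum>z\<in>\<Omega>. mexp \<Omega> t L x z * ff z)" .
      show "0 \<le> \<mu> x" using x mu_nonneg by auto
    qed
    also have "\<dots> \<le> (\<Sum>x\<in>\<Omega>. \<mu> x * (\<Sum>z\<in>\<Omega>. mexp \<Omega> t L x z * ff z))"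
      by (rule sum_mono2[OF fin]) (use t in \<open>auto intro!: mult_nonneg_nonneg mu_nonneg sum_nonneg P_nonneg ff_nonneg\<close>)
    finally have s1: "(\<Sum>x\<in>B. \<mu> x * (\<Sum>z\<in>B. mexp B t L x z * ff z)) \<le> (\<Sum>x\<in>\<Omega>. \<mu> x * (\<Sum>z\<in>\<Omega>. mexp \<Omega> t L x z * ff z))" .
    have "(\<Sum>x\<in>\<Omega>. \<mu> x * (\<Sum>z\<in>\<Omega>. mexp \<Omega> t L x z * ff z)) = (\<Sum>x\<in>\<Omega>. \<mu> x * (cc + evo t g x))"
    proof -
      have gf: "g = (\<lambda>z. ff z - cc)" by (simp add: g_def fun_eq_iff)
      show ?thesis by (rule sum.cong[OF refl]) (simp add: P_ff gf)
    qed
    also have "\<dots> = (\<Sum>x\<in>\<Omega>. \<mu> x) * cc + (\<Sum>x\<in>\<Omega>. \<mu> x * evo t g x)"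
      by (simp add: distrib_left sum.distrib sum_distrib_right mult.commute)
    finally have s2: "(\<Sum>x\<in>\<Omega>. \<mu> x * (\<Sum>z\<in>\<Omega>. mexp \<Omega> t L x z * ff z)) = cc + (\<Sum>x\<in>\<Omega>. \<mu> x * evo t g x)"
      using mu_sum by simp
    have s3: "(\<Sum>x\<in>\<Omega>. \<mu> x * evo t g x) \<le> nh * sqrt (\<Sum>x\<in>\<Omega>. \<nu> x * (evo t g x)\<^sup>2)"
      unfolding nh_def by (rule CS)
    have "sqrt (\<Sum>x\<in>\<Omega>. \<nu> x * (evo t g x)\<^sup>2) \<le> sqrt (exp (- (2*\<gamma>*t)) * (\<Sum>x\<in>\<Omega>. \<nu> x * (g x)\<^sup>2))"
      by (rule real_sqrt_le_mono, rule decay[OF poinc gm t])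
    also have "sqrt (exp (- (2*\<gamma>*t)) * (\<Sum>x\<in>\<Omega>. \<nu> x * (g x)\<^sup>2)) = exp (- (\<gamma> * t)) * ng"
    proof -
      have "exp (- (2*\<gamma>*t)) = (exp (- (\<gamma> * t)))\<^sup>2" by (simp add: power2_eq_square exp_add[symmetric])
      then show ?thesis unfolding ng_def L2norm_def g_def by (simp add: real_sqrt_mult)
    qed
    finally have s4: "sqrt (\<Sum>x\<in>\<Omega>. \<nu> x * (evo t g x)\<^sup>2) \<le> exp (- (\<gamma> * t)) * ng" .
    have s5: "nh * sqrt (\<Sum>x\<in>\<Omega>. \<nu> x * (evo t g x)\<^sup>2) \<le> nh * (exp (- (\<gamma> * t)) * ng)"
      by (rule mult_left_mono[OF s4 nh0])
    have s6: "nh * (exp (- (\<gamma> * t)) * ng) = nh * ng * exp (- (\<gamma> * t))" by (simp add: mult_ac)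
    show ?thesis using s1 s2 s3 s5 s6 by linarith
  qed
  define G where "G t = Hf t - t * cc - nh * ng * ((1 - exp (- (\<gamma> * t))) / \<gamma>)" for t
  have dG: "(G has_real_derivative (\<Sum>x\<in>B. \<mu> x * (\<Sum>z\<in>B. mexp B t L x z * ff z)) - 1 * cc - nh * ng * ((0 - exp (- (\<gamma> * t)) * (- \<gamma>)) / \<gamma>)) (at t)" for t
  proof -
    have d1: "((\<lambda>t. t * cc) has_real_derivative 1 * cc) (at t)" by (rule DERIV_cmult_right[OF DERIV_ident])
    have d2: "((\<lambda>t. exp (- (\<gamma> * t))) has_real_derivative exp (- (\<gamma> * t)) * (- \<gamma>)) (at t)"
      by (auto intro!: derivative_eq_intros)
    have d3: "((\<lambda>t. (1 - exp (- (\<gamma> * t))) / \<gamma>) has_real_derivative (0 - exp (- (\<gamma> * t)) * (- \<gamma>)) / \<gamma>) (at t)"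
      by (rule DERIV_cdivide[OF DERIV_diff[OF DERIV_const d2]])
    have d4: "((\<lambda>t. nh * ng * ((1 - exp (- (\<gamma> * t))) / \<gamma>)) has_real_derivative nh * ng * ((0 - exp (- (\<gamma> * t)) * (- \<gamma>)) / \<gamma>)) (at t)"
      by (rule DERIV_cmult[OF d3])
    show ?thesis unfolding G_def by (rule DERIV_diff[OF DERIV_diff[OF Hf_deriv d1] d4])
  qed
  have "G S \<le> G 0"
  proof (rule DERIV_nonpos_imp_nonincreasing[of 0 S G, OF S])
    fix t assume t: "0 \<le> t" "t \<le> S"
    have "(\<Sum>x\<in>B. \<mu> x * (\<Sum>z\<in>B. mexp B t L x z * ff z)) - 1 * cc - nh * ng * ((0 - exp (- (\<gamma> * t)) * (- \<gamma>)) / \<gamma>) \<le> 0"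
      using bound[OF t(1)] gp by simp
    then show "\<exists>y. (G has_real_derivative y) (at t) \<and> y \<le> 0" using dG by blast
  qed
  then show ?thesis unfolding G_def nh_def[symmetric] ng_def[symmetric] using Hf_zero by simp
qed

end



context chain begin

definition Bf :: "('a \<Rightarrow> real) \<Rightarrow> ('a \<Rightarrow> real) \<Rightarrow> real" where
  "Bf \<phi> \<psi> = (\<Sum>x\<in>\<Omega>. \<Sum>y\<in>\<Omega>. \<nu> x * L x y * \<phi> x * \<psi> y)"

lemma Ef_Bf: "Ef \<phi> = Bf \<phi> \<phi>" unfolding Ef_def Bf_def ..

lemma nu_R_col: "y \<in> \<Omega> \<Longrightarrow> (\<Sum>x\<in>\<Omega>. \<nu> x * R x y) = \<nu> y * (\<Sum>z\<in>\<Omega>. R y z)"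
proof -
  assume y: "y \<in> \<Omega>"
  have "0 = (\<Sum>x\<in>\<Omega>. \<nu> x * L x y)" using nu_stat[OF y] by simp
  also have "\<dots> = (\<Sum>x\<in>\<Omega>. \<nu> x * R x y - (if x = y then \<nu> x * (\<Sum>z\<in>\<Omega>. R x z) else 0))"
    by (rule sum.cong[OF refl]) (simp add: gen_alt right_diff_distrib)
  also have "\<dots> = (\<Sum>x\<in>\<Omega>. \<nu> x * R x y) - \<nu> y * (\<Sum>z\<in>\<Omega>. R y z)"
    using y fin by (simp add: sum_subtractf)
  finally show ?thesis by simp
qed

lemma dirichlet: "- Ef \<phi> = (\<Sum>x\<in>\<Omega>. \<Sum>y\<in>\<Omega>. \<nu> x * R x y * (\<phi> x - \<phi> y)\<^sup>2) / 2"
proof -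
  define W where "W = (\<Sum>x\<in>\<Omega>. \<nu> x * (\<phi> x)\<^sup>2 * (\<Sum>z\<in>\<Omega>. R x z))"
  define X where "X = (\<Sum>x\<in>\<Omega>. \<Sum>y\<in>\<Omega>. \<nu> x * R x y * \<phi> x * \<phi> y)"
  have E: "Ef \<phi> = X - W"
  proof -
    have "Ef \<phi> = (\<Sum>x\<in>\<Omega>. \<Sum>y\<in>\<Omega>. \<nu> x * R x y * \<phi> x * \<phi> y - (if x = y then \<nu> x * (\<phi> x)\<^sup>2 * (\<Sum>z\<in>\<Omega>. R x z) else 0))"
      unfolding Ef_def
      by (intro sum.cong refl) (auto simp: gen_alt algebra_simps power2_eq_square)
    also have "\<dots> = X - W"
      unfolding X_def W_def using fin by (simp add: sum_subtractf)
    finally show ?thesis .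
  qed
  have W1: "(\<Sum>x\<in>\<Omega>. \<Sum>y\<in>\<Omega>. \<nu> x * R x y * (\<phi> x)\<^sup>2) = W"
  proof -
    have "(\<Sum>y\<in>\<Omega>. \<nu> x * R x y * (\<phi> x)\<^sup>2) = \<nu> x * (\<phi> x)\<^sup>2 * (\<Sum>z\<in>\<Omega>. R x z)" for x
    proof -
      have "(\<Sum>y\<in>\<Omega>. \<nu> x * R x y * (\<phi> x)\<^sup>2) = (\<Sum>z\<in>\<Omega>. R x z) * (\<nu> x * (\<phi> x)\<^sup>2)"
        by (simp add: sum_distrib_right sum_distrib_left mult_ac)
      then show ?thesis by (simp add: mult_ac)
    qed
    then show ?thesis unfolding W_def by simp
  qed
  have W2: "(\<Sum>x\<in>\<Omega>. \<Sum>y\<in>\<Omega>. \<nu> x * R x y * (\<phi> y)\<^sup>2) = W"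
  proof -
    have "(\<Sum>x\<in>\<Omega>. \<Sum>y\<in>\<Omega>. \<nu> x * R x y * (\<phi> y)\<^sup>2) = (\<Sum>y\<in>\<Omega>. \<Sum>x\<in>\<Omega>. \<nu> x * R x y * (\<phi> y)\<^sup>2)"
      by (rule sum.swap)
    also have "\<dots> = (\<Sum>y\<in>\<Omega>. (\<Sum>x\<in>\<Omega>. \<nu> x * R x y) * (\<phi> y)\<^sup>2)" by (simp add: sum_distrib_right)
    also have "\<dots> = W" unfolding W_def by (rule sum.cong[OF refl]) (simp add: nu_R_col mult_ac)
    finally show ?thesis .
  qed
  have "(\<Sum>x\<in>\<Omega>. \<Sum>y\<in>\<Omega>. \<nu> x * R x y * (\<phi> x - \<phi> y)\<^sup>2)
     = (\<Sum>x\<in>\<Omega>. \<Sum>y\<in>\<Omega>. \<nu> x * R x y * (\<phi> x)\<^sup>2 + \<nu> x * R x y * (\<phi> y)\<^sup>2 - 2 * (\<nu> x * R x y * \<phi> x * \<phi> y))"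
    by (intro sum.cong refl) (simp add: power2_eq_square algebra_simps)
  also have "\<dots> = (\<Sum>x\<in>\<Omega>. \<Sum>y\<in>\<Omega>. \<nu> x * R x y * (\<phi> x)\<^sup>2) + (\<Sum>x\<in>\<Omega>. \<Sum>y\<in>\<Omega>. \<nu> x * R x y * (\<phi> y)\<^sup>2) - 2 * X"
    unfolding X_def
    by (simp only: sum.distrib sum_subtractf sum_distrib_left)
  also have "\<dots> = W + W - 2 * X" unfolding W1 W2 ..
  finally show ?thesis using E by simp
qed

lemma Ef_nonpos: "Ef \<phi> \<le> 0"
proof -
  have "0 \<le> (\<Sum>x\<in>\<Omega>. \<Sum>y\<in>\<Omega>. \<nu> x * R x y * (\<phi> x - \<phi> y)\<^sup>2) / 2"
    by (intro divide_nonneg_nonneg sum_nonneg mult_nonneg_nonneg nu_nonneg R_nonneg) auto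
  then show ?thesis using dirichlet[of \<phi>] by linarith
qed

lemma symform:
  "(\<Sum>x\<in>\<Omega>. \<nu> x * \<phi> x * (\<Sum>y\<in>\<Omega>. sym_gen \<Omega> R \<nu> x y * \<psi> y)) = (Bf \<phi> \<psi> + Bf \<psi> \<phi>) / 2"
proof -
  have "(\<Sum>x\<in>\<Omega>. \<nu> x * \<phi> x * (\<Sum>y\<in>\<Omega>. sym_gen \<Omega> R \<nu> x y * \<psi> y))
      = (\<Sum>x\<in>\<Omega>. \<Sum>y\<in>\<Omega>. (\<nu> x * L x y * \<phi> x * \<psi> y + \<nu> y * L y x * \<psi> y * \<phi> x) / 2)"
  proof (rule sum.cong[OF refl])
    fix x assume x: "x \<in> \<Omega>"
    have nx: "\<nu> x \<noteq> 0" using nu_pos[OF x] by simp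
    show "\<nu> x * \<phi> x * (\<Sum>y\<in>\<Omega>. sym_gen \<Omega> R \<nu> x y * \<psi> y) = (\<Sum>y\<in>\<Omega>. (\<nu> x * L x y * \<phi> x * \<psi> y + \<nu> y * L y x * \<psi> y * \<phi> x) / 2)"
      unfolding sum_distrib_left
      by (rule sum.cong[OF refl]) (simp add: sym_gen_def adj_gen_def field_simps nx)
  qed
  also have "\<dots> = (\<Sum>x\<in>\<Omega>. \<Sum>y\<in>\<Omega>. \<nu> x * L x y * \<phi> x * \<psi> y + \<nu> y * L y x * \<psi> y * \<phi> x) / 2"
    by (simp only: sum_divide_distrib)
  also have "\<dots> = ((\<Sum>x\<in>\<Omega>. \<Sum>y\<in>\<Omega>. \<nu> x * L x y * \<phi> x * \<psi> y) + (\<Sum>x\<in>\<Omega>. \<Sum>y\<in>\<Omega>. \<nu> y * L y x * \<psi> y * \<phi> x)) / 2"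
    by (simp only: sum.distrib)
  also have "(\<Sum>x\<in>\<Omega>. \<Sum>y\<in>\<Omega>. \<nu> y * L y x * \<psi> y * \<phi> x) = Bf \<psi> \<phi>"
    unfolding Bf_def by (rule sum.swap)
  finally show ?thesis unfolding Bf_def by simp
qed

lemma Bf_one_left: "Bf (\<lambda>_. 1) \<psi> = 0"
proof -
  have "Bf (\<lambda>_. 1) \<psi> = (\<Sum>x\<in>\<Omega>. \<Sum>y\<in>\<Omega>. \<nu> x * L x y * \<psi> y)" unfolding Bf_def by simp
  also have "\<dots> = (\<Sum>y\<in>\<Omega>. \<Sum>x\<in>\<Omega>. \<nu> x * L x y * \<psi> y)" by (rule sum.swap)
  also have "\<dots> = (\<Sum>y\<in>\<Omega>. (\<Sum>x\<in>\<Omega>. \<nu> x * L x y) * \<psi> y)" by (simp add: sum_distrib_right)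
  also have "\<dots> = 0" by (simp add: nu_stat)
  finally show ?thesis .
qed

lemma Bf_one_right: "Bf \<phi> (\<lambda>_. 1) = 0"
proof -
  have "Bf \<phi> (\<lambda>_. 1) = (\<Sum>x\<in>\<Omega>. \<nu> x * \<phi> x * (\<Sum>y\<in>\<Omega>. L x y))" unfolding Bf_def by (simp add: sum_distrib_left mult_ac)
  also have "\<dots> = 0" by (simp add: gen_rowsum)
  finally show ?thesis .
qed

lemma Bf_expand: "Bf (\<lambda>x. g x + e * \<phi> x) (\<lambda>x. g x + e * \<phi> x) = Bf g g + e * (Bf g \<phi> + Bf \<phi> g) + e\<^sup>2 * Bf \<phi> \<phi>"
proof -
  have "Bf (\<lambda>x. g x + e * \<phi> x) (\<lambda>x. g x + e * \<phi> x)
     = (\<Sum>x\<in>\<Omega>. \<Sum>y\<in>\<Omega>. \<nu> x * L x y * g x * g y + e * (\<nu> x * L x y * g x * \<phi> y + \<nu> x * L x y * \<phi> x * g y) + e\<^sup>2 * (\<nu> x * L x y * \<phi> x * \<phi> y))"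
    unfolding Bf_def by (intro sum.cong refl) (simp add: power2_eq_square algebra_simps)
  also have "\<dots> = Bf g g + e * (Bf g \<phi> + Bf \<phi> g) + e\<^sup>2 * Bf \<phi> \<phi>"
    unfolding Bf_def by (simp add: sum.distrib sum_distrib_left distrib_left)
  finally show ?thesis .
qed

lemma Bf_scale: "Bf (\<lambda>x. c * \<phi> x) (\<lambda>x. c * \<phi> x) = c\<^sup>2 * Bf \<phi> \<phi>"
  unfolding Bf_def by (simp add: sum_distrib_left power2_eq_square mult_ac)

lemma Bf_cong: "(\<And>x. x \<in> \<Omega> \<Longrightarrow> \<phi> x = \<phi>' x) \<Longrightarrow> Bf \<phi> \<phi> = Bf \<phi>' \<phi>'"
  unfolding Bf_def by (intro sum.cong refl) auto

end



lemma aux_lin: "(a::real) + b + 2 * c = 0 \<Longrightarrow> - ((b + a) / 2) - c = 0" by (simp add: field_simps)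

lemma quad_zero:
  fixes a b :: real
  assumes "\<forall>e. 0 \<le> e * a + e\<^sup>2 * b"
  shows "a = 0"
proof (rule ccontr)
  assume a: "a \<noteq> 0"
  define c where "c = \<bar>b\<bar> + 1"
  have c: "c > 0" "b \<le> c" unfolding c_def by auto
  define e where "e = - a / (2 * c)"
  have "e\<^sup>2 * b \<le> e\<^sup>2 * c" using c by (intro mult_left_mono) auto
  also have "e\<^sup>2 * c = a\<^sup>2 / (4 * c)" unfolding e_def using c by (simp add: power2_eq_square field_simps)
  finally have 1: "e\<^sup>2 * b \<le> a\<^sup>2 / (4 * c)" .
  have 2: "e * a = - (a\<^sup>2 / (2 * c))" unfolding e_def by (simp add: power2_eq_square)
  have 3: "a\<^sup>2 > 0" using a by simp
  have "a\<^sup>2 / (4 * c) < a\<^sup>2 / (2 * c)" using c 3 by (simp add: divide_strict_left_mono)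
  then have "e * a + e\<^sup>2 * b < 0" using 1 2 by linarith
  then show False using assms by (metis not_le)
qed

context chain begin

definition Kset :: "('a \<Rightarrow> real) set" where
  "Kset = {\<phi>. (\<forall>x. x \<notin> \<Omega> \<longrightarrow> \<phi> x = 0) \<and> (\<Sum>x\<in>\<Omega>. \<nu> x * \<phi> x) = 0 \<and> (\<Sum>x\<in>\<Omega>. \<nu> x * (\<phi> x)\<^sup>2) = 1}"

lemma cont_lin: "continuous_on UNIV (\<lambda>\<phi>::'a \<Rightarrow> real. \<Sum>x\<in>\<Omega>. c x * \<phi> x)"
  by (intro continuous_intros continuous_on_product_coordinates)

lemma cont_sq: "continuous_on UNIV (\<lambda>\<phi>::'a \<Rightarrow> real. \<Sum>x\<in>\<Omega>. c x * (\<phi> x)\<^sup>2)"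
  by (intro continuous_intros continuous_on_product_coordinates)

lemma cont_Bf: "continuous_on UNIV (\<lambda>\<phi>::'a \<Rightarrow> real. - Bf \<phi> \<phi>)"
  unfolding Bf_def by (intro continuous_intros continuous_on_product_coordinates)

lemma sq_le_one: "(\<Sum>x\<in>\<Omega>. \<nu> x * (\<phi> x)\<^sup>2) = 1 \<Longrightarrow> i \<in> \<Omega> \<Longrightarrow> - (1 / \<nu> i) - 1 \<le> \<phi> i \<and> \<phi> i \<le> 1 / \<nu> i + 1"
proof -
  assume s: "(\<Sum>x\<in>\<Omega>. \<nu> x * (\<phi> x)\<^sup>2) = 1" and i: "i \<in> \<Omega>"
  have ni: "\<nu> i > 0" using nu_pos[OF i] .
  have "\<nu> i * (\<phi> i)\<^sup>2 \<le> 1"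
    using member_le_sum[of i \<Omega> "\<lambda>x. \<nu> x * (\<phi> x)\<^sup>2"] i fin s nu_nonneg by auto
  then have "(\<phi> i)\<^sup>2 \<le> 1 / \<nu> i" using ni by (simp add: field_simps)
  also have "1 / \<nu> i \<le> (1 / \<nu> i + 1)\<^sup>2" using ni by (simp add: power2_eq_square field_simps)
  finally have "\<bar>\<phi> i\<bar>\<^sup>2 \<le> (1 / \<nu> i + 1)\<^sup>2" by simp
  then have "\<bar>\<phi> i\<bar> \<le> 1 / \<nu> i + 1" by (rule power2_le_imp_le) (use ni in simp)
  then show ?thesis by linarith
qed

lemma K_compact: "compact Kset"
proof -
  define S :: "'a \<Rightarrow> real set" where "S i = (if i \<in> \<Omega> then {- (1 / \<nu> i + 1) .. 1 / \<nu> i + 1} else {0})" for i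
  define Box where "Box = (PiE UNIV S :: ('a \<Rightarrow> real) set)"
  have "compactin (product_topology (\<lambda>i. euclidean) UNIV) Box"
    unfolding Box_def compactin_PiE by (auto simp: S_def)
  then have cB: "compact Box" unfolding euclidean_product_topology by simp
  have eq: "Kset = (Box \<inter> {\<phi>. (\<Sum>x\<in>\<Omega>. \<nu> x * \<phi> x) = 0}) \<inter> {\<phi>. (\<Sum>x\<in>\<Omega>. \<nu> x * (\<phi> x)\<^sup>2) = 1}"
    unfolding Kset_def Box_def
    using sq_le_one by (auto simp: PiE_iff S_def split: if_splits)
  show ?thesis unfolding eq
    by (intro compact_Int_closed cB closed_Collect_eq cont_lin cont_sq continuous_on_const)
qed

lemma sq_zero: "(\<Sum>x\<in>\<Omega>. \<nu> x * (\<phi> x)\<^sup>2) = 0 \<Longrightarrow> x \<in> \<Omega> \<Longrightarrow> \<phi> x = 0"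
proof -
  assume s: "(\<Sum>x\<in>\<Omega>. \<nu> x * (\<phi> x)\<^sup>2) = 0" and x: "x \<in> \<Omega>"
  have "\<forall>x\<in>\<Omega>. \<nu> x * (\<phi> x)\<^sup>2 = 0"
    using iffD1[OF sum_nonneg_eq_0_iff s] fin nu_nonneg by auto
  then have "\<nu> x * (\<phi> x)\<^sup>2 = 0" using x by blast
  then show ?thesis using nu_pos[OF x] by simp
qed

lemma sq_nonneg': "(\<Sum>x\<in>\<Omega>. \<nu> x * (\<phi> x)\<^sup>2) \<ge> 0"
  by (intro sum_nonneg mult_nonneg_nonneg nu_nonneg) auto

lemma normalize:
  assumes m: "(\<Sum>x\<in>\<Omega>. \<nu> x * \<phi> x) = 0" and p: "(\<Sum>x\<in>\<Omega>. \<nu> x * (\<phi> x)\<^sup>2) > 0"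
  shows "(\<lambda>x. if x \<in> \<Omega> then (1 / sqrt (\<Sum>x\<in>\<Omega>. \<nu> x * (\<phi> x)\<^sup>2)) * \<phi> x else 0) \<in> Kset"
proof -
  define s2 where "s2 = (\<Sum>x\<in>\<Omega>. \<nu> x * (\<phi> x)\<^sup>2)"
  have s2: "s2 > 0" using p unfolding s2_def .
  have "(\<Sum>x\<in>\<Omega>. \<nu> x * ((1 / sqrt s2) * \<phi> x)) = (1 / sqrt s2) * (\<Sum>x\<in>\<Omega>. \<nu> x * \<phi> x)"
    by (simp add: sum_distrib_left mult_ac)
  moreover have "(\<Sum>x\<in>\<Omega>. \<nu> x * ((1 / sqrt s2) * \<phi> x)\<^sup>2) = (1 / sqrt s2)\<^sup>2 * s2"
  proof -
    have e: "\<And>x. \<nu> x * ((1 / sqrt s2) * \<phi> x)\<^sup>2 = (1 / sqrt s2)\<^sup>2 * (\<nu> x * (\<phi> x)\<^sup>2)"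
      by (simp only: power_mult_distrib mult_ac)
    have "(\<Sum>x\<in>\<Omega>. \<nu> x * ((1 / sqrt s2) * \<phi> x)\<^sup>2) = (\<Sum>x\<in>\<Omega>. (1 / sqrt s2)\<^sup>2 * (\<nu> x * (\<phi> x)\<^sup>2))"
      by (simp only: e)
    also have "\<dots> = (1 / sqrt s2)\<^sup>2 * s2" unfolding s2_def by (rule sum_distrib_left[symmetric])
    finally show ?thesis .
  qed
  moreover have "(1 / sqrt s2)\<^sup>2 * s2 = 1" using s2 by (simp add: power_divide)
  ultimately show ?thesis unfolding Kset_def s2_def[symmetric] using m by simp
qed

lemma poincare:
  assumes Kne: "Kset \<noteq> {}"
  shows "spectral_gap \<Omega> R \<nu> > 0 \<and> (\<forall>\<phi>. (\<Sum>x\<in>\<Omega>. \<nu> x * \<phi> x) = 0 \<longrightarrow> spectral_gap \<Omega> R \<nu> * (\<Sum>x\<in>\<Omega>. \<nu> x * (\<phi> x)\<^sup>2) \<le> - Ef \<phi>)"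
proof -
  obtain g where gK: "g \<in> Kset" and gmin: "\<forall>\<psi>\<in>Kset. - Bf g g \<le> - Bf \<psi> \<psi>"
    using continuous_attains_inf[OF K_compact Kne continuous_on_subset[OF cont_Bf]] by blast
  define m where "m = - Bf g g"
  have g0: "(\<Sum>x\<in>\<Omega>. \<nu> x * g x) = 0" and g1: "(\<Sum>x\<in>\<Omega>. \<nu> x * (g x)\<^sup>2) = 1"
    using gK unfolding Kset_def by auto
  have hom: "m * (\<Sum>x\<in>\<Omega>. \<nu> x * (\<phi> x)\<^sup>2) \<le> - Bf \<phi> \<phi>" if mz: "(\<Sum>x\<in>\<Omega>. \<nu> x * \<phi> x) = 0" for \<phi>
  proof (cases "(\<Sum>x\<in>\<Omega>. \<nu> x * (\<phi> x)\<^sup>2) = 0")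
    case True
    have "Bf \<phi> \<phi> = Bf (\<lambda>_. 0) (\<lambda>_. 0)" by (rule Bf_cong) (use sq_zero[OF True] in auto)
    then show ?thesis using True by (simp add: Bf_def)
  next
    case False
    define s2 where "s2 = (\<Sum>x\<in>\<Omega>. \<nu> x * (\<phi> x)\<^sup>2)"
    have s2: "s2 > 0" using False sq_nonneg'[of \<phi>] unfolding s2_def by linarith
    define \<psi> where "\<psi> = (\<lambda>x. if x \<in> \<Omega> then (1 / sqrt s2) * \<phi> x else 0)"
    have "\<psi> \<in> Kset" unfolding \<psi>_def s2_def by (rule normalize[OF mz]) (use s2 s2_def in simp)
    then have "m \<le> - Bf \<psi> \<psi>" using gmin unfolding m_def by blast
    also have "Bf \<psi> \<psi> = Bf (\<lambda>x. (1 / sqrt s2) * \<phi> x) (\<lambda>x. (1 / sqrt s2) * \<phi> x)"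
      by (rule Bf_cong) (simp add: \<psi>_def)
    also have "\<dots> = (1 / sqrt s2)\<^sup>2 * Bf \<phi> \<phi>" by (rule Bf_scale)
    also have "(1 / sqrt s2)\<^sup>2 = 1 / s2" using s2 by (simp add: power_divide)
    finally have "m \<le> - (Bf \<phi> \<phi> / s2)" by simp
    then have "m * s2 \<le> - (Bf \<phi> \<phi> / s2) * s2" using s2 by (intro mult_right_mono) auto
    then show ?thesis using s2 unfolding s2_def[symmetric] by simp
  qed
  have var: "Bf g \<phi> + Bf \<phi> g + 2 * m * (\<Sum>x\<in>\<Omega>. \<nu> x * g x * \<phi> x) = 0" if mz: "(\<Sum>x\<in>\<Omega>. \<nu> x * \<phi> x) = 0" for \<phi>
  proof -
    define a where "a = Bf g \<phi> + Bf \<phi> g + 2 * m * (\<Sum>x\<in>\<Omega>. \<nu> x * g x * \<phi> x)"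
    define b where "b = - Bf \<phi> \<phi> - m * (\<Sum>x\<in>\<Omega>. \<nu> x * (\<phi> x)\<^sup>2)"
    have "0 \<le> e * (- a) + e\<^sup>2 * b" for e
    proof -
      have "(\<Sum>x\<in>\<Omega>. \<nu> x * (g x + e * \<phi> x)) = (\<Sum>x\<in>\<Omega>. \<nu> x * g x + e * (\<nu> x * \<phi> x))"
        by (rule sum.cong) (simp_all add: algebra_simps)
      also have "\<dots> = (\<Sum>x\<in>\<Omega>. \<nu> x * g x) + e * (\<Sum>x\<in>\<Omega>. \<nu> x * \<phi> x)"
        by (simp only: sum.distrib sum_distrib_left)
      finally have mz': "(\<Sum>x\<in>\<Omega>. \<nu> x * (g x + e * \<phi> x)) = 0" using g0 mz by simp
      have n: "(\<Sum>x\<in>\<Omega>. \<nu> x * (g x + e * \<phi> x)\<^sup>2) = 1 + 2 * e * (\<Sum>x\<in>\<Omega>. \<nu> x * g x * \<phi> x) + e\<^sup>2 * (\<Sum>x\<in>\<Omega>. \<nu> x * (\<phi> x)\<^sup>2)"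
      proof -
        have "(\<Sum>x\<in>\<Omega>. \<nu> x * (g x + e * \<phi> x)\<^sup>2) = (\<Sum>x\<in>\<Omega>. \<nu> x * (g x)\<^sup>2 + 2 * e * (\<nu> x * g x * \<phi> x) + e\<^sup>2 * (\<nu> x * (\<phi> x)\<^sup>2))"
          by (rule sum.cong[OF refl]) (simp add: power2_eq_square algebra_simps)
        also have "\<dots> = (\<Sum>x\<in>\<Omega>. \<nu> x * (g x)\<^sup>2) + 2 * e * (\<Sum>x\<in>\<Omega>. \<nu> x * g x * \<phi> x) + e\<^sup>2 * (\<Sum>x\<in>\<Omega>. \<nu> x * (\<phi> x)\<^sup>2)"
          by (simp only: sum.distrib sum_distrib_left)
        finally show ?thesis using g1 by simp
      qed
      have "m * (1 + 2 * e * (\<Sum>x\<in>\<Omega>. \<nu> x * g x * \<phi> x) + e\<^sup>2 * (\<Sum>x\<in>\<Omega>. \<nu> x * (\<phi> x)\<^sup>2))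
          \<le> - (Bf g g + e * (Bf g \<phi> + Bf \<phi> g) + e\<^sup>2 * Bf \<phi> \<phi>)"
        using hom[OF mz'] unfolding n Bf_expand .
      then show ?thesis unfolding a_def b_def m_def by (simp add: algebra_simps)
    qed
    then have "- a = 0" by (intro quad_zero) auto
    then show ?thesis unfolding a_def by simp
  qed
  define v where "v x = - (\<Sum>y\<in>\<Omega>. sym_gen \<Omega> R \<nu> x y * g y) - m * g x" for x
  have vorth: "(\<Sum>x\<in>\<Omega>. \<nu> x * \<phi> x * v x) = 0" if mz: "(\<Sum>x\<in>\<Omega>. \<nu> x * \<phi> x) = 0" for \<phi>
  proof -
    have "(\<Sum>x\<in>\<Omega>. \<nu> x * \<phi> x * v x) = - (\<Sum>x\<in>\<Omega>. \<nu> x * \<phi> x * (\<Sum>y\<in>\<Omega>. sym_gen \<Omega> R \<nu> x y * g y)) - m * (\<Sum>x\<in>\<Omega>. \<nu> x * g x * \<phi> x)"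
      unfolding v_def by (simp add: algebra_simps sum.distrib sum_subtractf sum_distrib_left sum_negf)
    also have "\<dots> = - ((Bf \<phi> g + Bf g \<phi>) / 2) - m * (\<Sum>x\<in>\<Omega>. \<nu> x * g x * \<phi> x)" by (simp only: symform)
    also have "\<dots> = 0"
    proof -
      have "2 * m * (\<Sum>x\<in>\<Omega>. \<nu> x * g x * \<phi> x) = 2 * (m * (\<Sum>x\<in>\<Omega>. \<nu> x * g x * \<phi> x))" by simp
      show ?thesis by (rule aux_lin[of "Bf g \<phi>" "Bf \<phi> g"]) (use var[OF mz] in \<open>simp add: mult.assoc\<close>)
    qed
    finally show ?thesis .
  qed
  have vmean: "(\<Sum>x\<in>\<Omega>. \<nu> x * v x) = 0"
  proof -
    have "(\<Sum>x\<in>\<Omega>. \<nu> x * v x) = - (\<Sum>x\<in>\<Omega>. \<nu> x * 1 * (\<Sum>y\<in>\<Omega>. sym_gen \<Omega> R \<nu> x y * g y)) - m * (\<Sum>x\<in>\<Omega>. \<nu> x * g x)"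
      unfolding v_def by (simp add: algebra_simps sum.distrib sum_subtractf sum_distrib_left sum_negf)
    also have "\<dots> = - ((Bf (\<lambda>_. 1) g + Bf g (\<lambda>_. 1)) / 2) - m * (\<Sum>x\<in>\<Omega>. \<nu> x * g x)"
      using symform[of "\<lambda>_. 1" g] by simp
    also have "\<dots> = 0" using g0 Bf_one_left Bf_one_right by simp
    finally show ?thesis .
  qed
  have v0: "v x = 0" if x: "x \<in> \<Omega>" for x
  proof -
    have "(\<Sum>x\<in>\<Omega>. \<nu> x * (v x)\<^sup>2) = 0" using vorth[OF vmean] by (simp add: power2_eq_square mult_ac)
    then show ?thesis using sq_zero x by blast
  qed
  have eig: "\<forall>x\<in>\<Omega>. - (\<Sum>y\<in>\<Omega>. sym_gen \<Omega> R \<nu> x y * g y) = m * g x"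
    using v0 unfolding v_def by (auto simp: algebra_simps)
  have m0: "m \<ge> 0" unfolding m_def using Ef_nonpos[of g] by (simp add: Ef_Bf)
  have mpos: "m > 0"
  proof (rule ccontr)
    assume "\<not> m > 0"
    then have m00: "m = 0" using m0 by simp
    have ds: "(\<Sum>x\<in>\<Omega>. \<Sum>y\<in>\<Omega>. \<nu> x * R x y * (g x - g y)\<^sup>2) = 0"
      using dirichlet[of g] m00 unfolding m_def Ef_Bf by simp
    have nn1: "\<And>x y. x \<in> \<Omega> \<Longrightarrow> y \<in> \<Omega> \<Longrightarrow> 0 \<le> \<nu> x * R x y * (g x - g y)\<^sup>2"
      by (intro mult_nonneg_nonneg) (auto simp: nu_nonneg R_nonneg)
    have nn: "\<And>x. x \<in> \<Omega> \<Longrightarrow> 0 \<le> (\<Sum>y\<in>\<Omega>. \<nu> x * R x y * (g x - g y)\<^sup>2)"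
      by (intro sum_nonneg nn1)
    have inner: "\<forall>x\<in>\<Omega>. (\<Sum>y\<in>\<Omega>. \<nu> x * R x y * (g x - g y)\<^sup>2) = 0"
      using iffD1[OF sum_nonneg_eq_0_iff[OF fin nn] ds] .
    have edge: "g x = g y" if "x \<in> \<Omega>" "y \<in> \<Omega>" "R x y > 0" for x y
    proof -
      have nnx: "\<And>y. y \<in> \<Omega> \<Longrightarrow> 0 \<le> \<nu> x * R x y * (g x - g y)\<^sup>2" using nn1 that(1) by blast
      have "(\<Sum>y\<in>\<Omega>. \<nu> x * R x y * (g x - g y)\<^sup>2) = 0" using inner that(1) by blast
      then have "\<forall>y\<in>\<Omega>. \<nu> x * R x y * (g x - g y)\<^sup>2 = 0" using sum_nonneg_eq_0_iff[of \<Omega> "\<lambda>y. \<nu> x * R x y * (g x - g y)\<^sup>2"] fin nnx by blast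
      then have "\<nu> x * R x y * (g x - g y)\<^sup>2 = 0" using that by auto
      then show ?thesis using that nu_pos[of x] by simp
    qed
    define E where "E = {(u, v). u \<in> \<Omega> \<and> v \<in> \<Omega> \<and> u \<noteq> v \<and> R u v > 0}"
    obtain x0 where x0: "x0 \<in> \<Omega>" using ne by auto
    have const: "g y = g x0" if y: "y \<in> \<Omega>" for y
    proof -
      have "(y, x0) \<in> E\<^sup>*" using irr y x0 unfolding irreducible_def E_def by blast
      then show ?thesis
      proof (induction rule: converse_rtrancl_induct)
        case base then show ?case by simp
      next
        case (step a b) then show ?case using edge unfolding E_def by auto
      qed
    qed
    have "(\<Sum>x\<in>\<Omega>. \<nu> x * g x) = (\<Sum>x\<in>\<Omega>. \<nu> x) * g x0"
      by (simp add: sum_distrib_right const)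
    then have "g x0 = 0" using g0 nu_sum by simp
    then have "(\<Sum>x\<in>\<Omega>. \<nu> x * (g x)\<^sup>2) = 0" using const by simp
    then show False using g1 by simp
  qed
  define SS where "SS = {l. l > 0 \<and> (\<exists>f. (\<exists>x\<in>\<Omega>. f x \<noteq> 0) \<and>
        (\<forall>x\<in>\<Omega>. - (\<Sum>y\<in>\<Omega>. sym_gen \<Omega> R \<nu> x y * f y) = l * f x))}"
  have mSS: "m \<in> SS"
  proof -
    have "\<exists>x\<in>\<Omega>. g x \<noteq> 0"
    proof (rule ccontr)
      assume "\<not> (\<exists>x\<in>\<Omega>. g x \<noteq> 0)"
      then have "(\<Sum>x\<in>\<Omega>. \<nu> x * (g x)\<^sup>2) = 0" by simp
      then show False using g1 by simp
    qed
    then show ?thesis unfolding SS_def using mpos eig by blast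
  qed
  have mle: "m \<le> l" if l: "l \<in> SS" for l
  proof -
    obtain f where lp: "l > 0" and fnz: "\<exists>x\<in>\<Omega>. f x \<noteq> 0"
      and fe: "\<forall>x\<in>\<Omega>. - (\<Sum>y\<in>\<Omega>. sym_gen \<Omega> R \<nu> x y * f y) = l * f x"
      using l unfolding SS_def by blast
    have "l * (\<Sum>x\<in>\<Omega>. \<nu> x * f x) = (\<Sum>x\<in>\<Omega>. \<nu> x * 1 * (- (\<Sum>y\<in>\<Omega>. sym_gen \<Omega> R \<nu> x y * f y)))"
      using fe by (simp add: sum_distrib_left mult_ac)
    also have "\<dots> = - (\<Sum>x\<in>\<Omega>. \<nu> x * 1 * (\<Sum>y\<in>\<Omega>. sym_gen \<Omega> R \<nu> x y * f y))" by (simp add: sum_negf)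
    also have "\<dots> = 0" unfolding symform using Bf_one_left Bf_one_right by simp
    finally have fm: "(\<Sum>x\<in>\<Omega>. \<nu> x * f x) = 0" using lp by simp
    have "l * (\<Sum>x\<in>\<Omega>. \<nu> x * (f x)\<^sup>2) = (\<Sum>x\<in>\<Omega>. \<nu> x * f x * (- (\<Sum>y\<in>\<Omega>. sym_gen \<Omega> R \<nu> x y * f y)))"
      using fe by (simp add: sum_distrib_left power2_eq_square mult_ac)
    also have "\<dots> = - (\<Sum>x\<in>\<Omega>. \<nu> x * f x * (\<Sum>y\<in>\<Omega>. sym_gen \<Omega> R \<nu> x y * f y))" by (simp add: sum_negf)
    also have "\<dots> = - Bf f f" unfolding symform by simp
    finally have lq: "l * (\<Sum>x\<in>\<Omega>. \<nu> x * (f x)\<^sup>2) = - Bf f f" .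
    have pos: "(\<Sum>x\<in>\<Omega>. \<nu> x * (f x)\<^sup>2) > 0"
    proof -
      have "(\<Sum>x\<in>\<Omega>. \<nu> x * (f x)\<^sup>2) \<noteq> 0" using sq_zero fnz by blast
      then show ?thesis using sq_nonneg'[of f] by linarith
    qed
    have "m * (\<Sum>x\<in>\<Omega>. \<nu> x * (f x)\<^sup>2) \<le> l * (\<Sum>x\<in>\<Omega>. \<nu> x * (f x)\<^sup>2)" using hom[OF fm] lq by simp
    then show ?thesis using pos by simp
  qed
  have sg: "spectral_gap \<Omega> R \<nu> = m"
    unfolding spectral_gap_def SS_def[symmetric] by (rule cInf_eq_minimum[OF mSS mle])
  show ?thesis unfolding sg using mpos hom by (simp add: Ef_Bf)
qed

lemma degenerate:
  assumes "Kset = {}" "(\<Sum>x\<in>\<Omega>. \<nu> x * \<phi> x) = 0"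
  shows "(\<Sum>x\<in>\<Omega>. \<nu> x * (\<phi> x)\<^sup>2) = 0"
proof (rule ccontr)
  assume "(\<Sum>x\<in>\<Omega>. \<nu> x * (\<phi> x)\<^sup>2) \<noteq> 0"
  then have "(\<Sum>x\<in>\<Omega>. \<nu> x * (\<phi> x)\<^sup>2) > 0" using sq_nonneg'[of \<phi>] by linarith
  then show False using normalize[OF assms(2)] assms(1) by blast
qed

end



context chain begin

lemma g_mean: "(\<Sum>x\<in>\<Omega>. \<nu> x * (ff x - cc)) = 0"
proof -
  have "(\<Sum>x\<in>\<Omega>. \<nu> x * (ff x - cc)) = (\<Sum>x\<in>\<Omega>. \<nu> x * ff x) - (\<Sum>x\<in>\<Omega>. \<nu> x) * cc"
    by (simp add: right_diff_distrib sum_subtractf sum_distrib_right)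
  then show ?thesis unfolding cc_def using nu_sum by simp
qed

lemma ng_le: "L2norm \<Omega> \<nu> (\<lambda>x. ff x - cc) \<le> L2norm \<Omega> \<nu> ff"
proof -
  have "(\<Sum>x\<in>\<Omega>. \<nu> x * (ff x - cc)\<^sup>2) = (\<Sum>x\<in>\<Omega>. \<nu> x * (ff x)\<^sup>2 - 2 * cc * (\<nu> x * ff x) + cc\<^sup>2 * \<nu> x)"
    by (rule sum.cong[OF refl]) (simp add: power2_eq_square algebra_simps)
  also have "\<dots> = (\<Sum>x\<in>\<Omega>. \<nu> x * (ff x)\<^sup>2) - 2 * cc * (\<Sum>x\<in>\<Omega>. \<nu> x * ff x) + cc\<^sup>2 * (\<Sum>x\<in>\<Omega>. \<nu> x)"
    by (simp only: sum.distrib sum_subtractf sum_distrib_left)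
  also have "\<dots> = (\<Sum>x\<in>\<Omega>. \<nu> x * (ff x)\<^sup>2) - cc\<^sup>2"
    unfolding cc_def[symmetric] nu_sum by (simp add: power2_eq_square)
  also have "\<dots> \<le> (\<Sum>x\<in>\<Omega>. \<nu> x * (ff x)\<^sup>2)" by simp
  finally show ?thesis unfolding L2norm_def by (rule real_sqrt_le_mono)
qed

lemma cc_eq: "cc = meas \<nu> B * cap_rate \<Omega> R \<nu> A"
proof -
  have c1: "cc = (\<Sum>x\<in>B. \<nu> x * rate_to R x A)"
  proof -
    have "cc = (\<Sum>x\<in>B. \<nu> x * ff x) + (\<Sum>x\<in>A. \<nu> x * ff x)"
      unfolding cc_def using sum.subset_diff[OF AO fin, of "\<lambda>x. \<nu> x * ff x"] by simp
    also have "(\<Sum>x\<in>A. \<nu> x * ff x) = 0" by (simp add: ff_def)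
    also have "(\<Sum>x\<in>B. \<nu> x * ff x) = (\<Sum>x\<in>B. \<nu> x * rate_to R x A)"
      by (rule sum.cong[OF refl]) (simp add: ff_B)
    finally show ?thesis by simp
  qed
  show ?thesis
  proof (cases "B = {}")
    case True
    show ?thesis using c1 unfolding cap_rate_def meas_def True by simp
  next
    case False
    then obtain x where x: "x \<in> B" by auto
    have "meas \<nu> B \<ge> \<nu> x" unfolding meas_def
      using member_le_sum[of x B \<nu>] x finB nu_nonneg by auto
    then have "meas \<nu> B \<noteq> 0" using nu_pos[of x] x by auto
    then show ?thesis using c1 unfolding cap_rate_def by simp
  qed
qed

lemma core:
  assumes S: "S > 0"
  shows "0 \<le> hit_before \<Omega> R \<mu> A S \<and> hit_before \<Omega> R \<mu> A S \<le>
     \<bar>meas \<mu> A + S * meas \<nu> B * cap_rate \<Omega> R \<nu> A\<bar> +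
     \<bar>L2norm \<Omega> \<nu> (\<lambda>x. (if x \<notin> A then 1 else 0) * rate_to R x A)
               * L2norm \<Omega> \<nu> (\<lambda>x. \<mu> x / \<nu> x)
               * T_rel \<Omega> R \<nu>
               * (1 - exp (- S / T_rel \<Omega> R \<nu>))\<bar>"
proof -
  have hb: "hit_before \<Omega> R \<mu> A S = Hf S" using S unfolding hit_before_def Hf_def by simp
  have low: "0 \<le> Hf S" using Hf_lower[of S] S meas_mu_nonneg by simp
  define nh where "nh = L2norm \<Omega> \<nu> (\<lambda>x. \<mu> x / \<nu> x)"
  define nf where "nf = L2norm \<Omega> \<nu> ff"
  define ng where "ng = L2norm \<Omega> \<nu> (\<lambda>x. ff x - cc)"
  have ffe: "(\<lambda>x. (if x \<notin> A then 1 else 0) * rate_to R x A) = ff" by (simp add: ff_def fun_eq_iff)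
  have nh0: "nh \<ge> 0" unfolding nh_def L2norm_def
    by (intro real_sqrt_ge_zero sum_nonneg mult_nonneg_nonneg) (auto simp: nu_nonneg)
  have ngf: "ng \<le> nf" unfolding ng_def nf_def by (rule ng_le)
  define a where "a = meas \<mu> A + S * meas \<nu> B * cap_rate \<Omega> R \<nu> A"
  have a_eq: "meas \<mu> A + S * cc = a" unfolding a_def cc_eq by (simp add: mult_ac)
  define b where "b = nf * nh * T_rel \<Omega> R \<nu> * (1 - exp (- S / T_rel \<Omega> R \<nu>))"
  have up: "Hf S \<le> \<bar>a\<bar> + \<bar>b\<bar>"
  proof (cases "Kset = {}")
    case True
    have poinc: "\<forall>\<phi>. (\<Sum>x\<in>\<Omega>. \<nu> x * \<phi> x) = 0 \<longrightarrow> 1 * (\<Sum>x\<in>\<Omega>. \<nu> x * (\<phi> x)\<^sup>2) \<le> - Ef \<phi>"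
      using degenerate[OF True] Ef_nonpos by fastforce
    have "Hf S \<le> meas \<mu> A + S * cc + nh * ng * ((1 - exp (- (1 * S))) / 1)"
      unfolding nh_def ng_def by (rule hit_upper[OF _ poinc]) (use S in auto)
    moreover have "ng = 0" unfolding ng_def L2norm_def using degenerate[OF True g_mean] by simp
    ultimately have "Hf S \<le> a" using a_eq by simp
    then show ?thesis by linarith
  next
    case False
    define \<gamma> where "\<gamma> = spectral_gap \<Omega> R \<nu>"
    have gp: "\<gamma> > 0" and poinc: "\<forall>\<phi>. (\<Sum>x\<in>\<Omega>. \<nu> x * \<phi> x) = 0 \<longrightarrow> \<gamma> * (\<Sum>x\<in>\<Omega>. \<nu> x * (\<phi> x)\<^sup>2) \<le> - Ef \<phi>"
      using poincare[OF False] unfolding \<gamma>_def by auto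
    have h: "Hf S \<le> meas \<mu> A + S * cc + nh * ng * ((1 - exp (- (\<gamma> * S))) / \<gamma>)"
      unfolding nh_def ng_def by (rule hit_upper[OF gp poinc]) (use S in auto)
    have e0: "0 \<le> (1 - exp (- (\<gamma> * S))) / \<gamma>" using gp S by (simp add: mult_pos_pos)
    have "nh * ng * ((1 - exp (- (\<gamma> * S))) / \<gamma>) \<le> nh * nf * ((1 - exp (- (\<gamma> * S))) / \<gamma>)"
      by (intro mult_right_mono mult_left_mono ngf nh0 e0)
    also have "\<dots> = b"
    proof -
      have T: "T_rel \<Omega> R \<nu> = 1 / \<gamma>" unfolding T_rel_def \<gamma>_def ..
      have "- S / (1 / \<gamma>) = - (\<gamma> * S)" by (simp add: mult_ac)
      then show ?thesis unfolding b_def T by (simp add: mult_ac)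
    qed
    finally show ?thesis using h a_eq by linarith
  qed
  show ?thesis using hb low up unfolding a_def b_def nh_def nf_def ffe by (simp add: mult_ac)
qed

end

theorem lemma3p9:
  fixes \<Omega> :: "nat \<Rightarrow> 'a set"
    and R :: "nat \<Rightarrow> 'a \<Rightarrow> 'a \<Rightarrow> real"
    and \<nu> \<mu> :: "nat \<Rightarrow> 'a \<Rightarrow> real"
    and A :: "nat \<Rightarrow> 'a set"
    and S :: "nat \<Rightarrow> real"
  assumes fin: "\<forall>N\<ge>1. finite (\<Omega> N) \<and> \<Omega> N \<noteq> {}"
    and rates: "\<forall>N\<ge>1. \<forall>x\<in>\<Omega> N. \<forall>y\<in>\<Omega> N. R N x y \<ge> 0 \<and> R N x x = 0"
    and irr: "\<forall>N\<ge>1. irreducible (\<Omega> N) (R N)"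
    and stat: "\<forall>N\<ge>1. stationary (\<Omega> N) (R N) (\<nu> N)"
    and AN: "\<forall>N\<ge>1. A N \<subseteq> \<Omega> N"
    and nuA: "(\<lambda>N. meas (\<nu> N) (A N)) \<longlonglongrightarrow> 0"
    and Sinc: "\<forall>N\<ge>1. S N \<le> S (Suc N)"
    and mu: "\<forall>N\<ge>1. is_prob (\<Omega> N) (\<mu> N)"
    and h1: "(\<lambda>N. meas (\<mu> N) (A N)
               + S N * meas (\<nu> N) (\<Omega> N - A N) * cap_rate (\<Omega> N) (R N) (\<nu> N) (A N)) \<longlonglongrightarrow> 0"
    and h2: "(\<lambda>N. L2norm (\<Omega> N) (\<nu> N)
                  (\<lambda>x. (if x \<notin> A N then 1 else 0) * rate_to (R N) x (A N))
               * L2norm (\<Omega> N) (\<nu> N) (\<lambda>x. \<mu> N x / \<nu> N x)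
               * T_rel (\<Omega> N) (R N) (\<nu> N)
               * (1 - exp (- S N / T_rel (\<Omega> N) (R N) (\<nu> N)))) \<longlonglongrightarrow> 0"
  shows "(\<lambda>N. hit_before (\<Omega> N) (R N) (\<mu> N) (A N) (S N)) \<longlonglongrightarrow> 0"
proof -
  define a where "a N = meas (\<mu> N) (A N)
               + S N * meas (\<nu> N) (\<Omega> N - A N) * cap_rate (\<Omega> N) (R N) (\<nu> N) (A N)" for N
  define b where "b N = L2norm (\<Omega> N) (\<nu> N)
                  (\<lambda>x. (if x \<notin> A N then 1 else 0) * rate_to (R N) x (A N))
               * L2norm (\<Omega> N) (\<nu> N) (\<lambda>x. \<mu> N x / \<nu> N x)
               * T_rel (\<Omega> N) (R N) (\<nu> N)
               * (1 - exp (- S N / T_rel (\<Omega> N) (R N) (\<nu> N)))" for N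
  define h where "h N = hit_before (\<Omega> N) (R N) (\<mu> N) (A N) (S N)" for N
  have bnd: "0 \<le> h N \<and> h N \<le> \<bar>a N\<bar> + \<bar>b N\<bar>" if N: "N \<ge> 1" for N
  proof (cases "S N > 0")
    case True
    interpret chain "\<Omega> N" "R N" "\<nu> N" "\<mu> N" "A N"
      using fin rates irr stat AN mu N by unfold_locales auto
    show ?thesis using core[OF True] unfolding h_def a_def b_def .
  next
    case False
    then show ?thesis unfolding h_def hit_before_def by simp
  qed
  have lim: "(\<lambda>N. \<bar>a N\<bar> + \<bar>b N\<bar>) \<longlonglongrightarrow> 0"
    using tendsto_add_zero[OF tendsto_rabs_zero[OF h1] tendsto_rabs_zero[OF h2]]
    unfolding a_def b_def .
  have lim2: "(\<lambda>N. - (\<bar>a N\<bar> + \<bar>b N\<bar>)) \<longlonglongrightarrow> 0"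
    using tendsto_minus[OF lim] by simp
  have "h \<longlonglongrightarrow> 0"
  proof (rule tendsto_sandwich[OF _ _ lim2 lim])
    show "\<forall>\<^sub>F N in sequentially. - (\<bar>a N\<bar> + \<bar>b N\<bar>) \<le> h N"
      by (rule eventually_sequentiallyI[of 1]) (use bnd in force)
    show "\<forall>\<^sub>F N in sequentially. h N \<le> \<bar>a N\<bar> + \<bar>b N\<bar>"
      by (rule eventually_sequentiallyI[of 1]) (use bnd in blast)
  qed
  then show ?thesis unfolding h_def .
qed


end
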